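(* If the second-order Lagrangian $L$ is homogeneous, then its Hilbert forms satisfy $d^i_l\vartheta^m=\delta^i_l\vartheta^m-\delta^m_l\vartheta^i$ for all $i,l,m\in\{1,2\}$.
   Context: Let $E$ be a smooth manifold of dimension $n$ with local coordinates $(u^\alpha)$. For $k\ge 1$, $\mathcal F^k_{(2)}E$ denotes the bundle of $k$-th order 2-frames in $E$ (regular $k$-th order 2-velocities, i.e. $k$-jets at $0$ of maps $\mathbb R^2\to E$ of rank 2 at $0$), with induced coordinates $u^\alpha_{i_1\cdots i_s}$ ($0\le s\le k$, indices in $\{1,2\}$, totally symmetric in the subscripts). Pull-backs along the projections $\mathcal F^l_{(2)}E\to\mathcal F^k_{(2)}E$ are omitted. $\#(i_1\cdots i_s)$ denotes the number of distinct rearrangements of $(i_1,\dots,i_s)$; repeated indices in $\{1,2\}$ are summed. The total derivatives are the vector fields along $\mathcal F^{k+1}_{(2)}E\to\mathcal F^k_{(2)}E$ given by $\mathbf T_i=\sum_{s=0}^k \frac{1}{\#(i_1\cdots i_s)}u^\alpha_{i i_1\cdots i_s}\,\partial/\partial u^\alpha_{i_1\cdots i_s}$, and the vertical endomorphisms are the type $(1,1)$ tensor fields on $\mathcal F^{k+1}_{(2)}E$ given by $S^j=\sum_{s=0}^k \frac{s+1}{\#(i_1\cdots i_s)}\,\partial/\partial u^\alpha_{j i_1\cdots i_s}\otimes du^\alpha_{i_1\cdots i_s}$. The $S^i$ commute and $S^{i_1\cdots i_s}$ denotes their composite. On forms, $S^i$ acts as the degree-zero derivation $(S^i\omega)(X_1,\dots,X_r)=\sum_a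 \omega(X_1,\dots,S^iX_a,\dots,X_r)$ (zero on functions). The fundamental vector fields are $\Delta^{i_1\cdots i_s}_i=S^{i_1\cdots i_s}(\mathbf T_i)$, well-defined vector fields on $\mathcal F^{k+1}_{(2)}E$. Contraction with $\mathbf T_i$ and with $\Delta^{i_1\cdots i_s}_i$ is denoted $i_i$ and $i^{i_1\cdots i_s}_i$; the corresponding Lie derivatives are $d_i=d\,i_i+i_i\,d$ and $d^{i_1\cdots i_s}_i=d\,i^{i_1\cdots i_s}_i+i^{i_1\cdots i_s}_i d$. The $d_i$ commute and $d_{j_1\cdots j_s}$ denotes their composite. A second-order Lagrangian is a smooth function $L$ on (an open subset of) $\mathcal F^2_{(2)}E$; it is homogeneous if $d^i_jL=\delta^i_jL$ and $d^{ik}_jL=0$ for all $i,j,k$. Its Hilbert forms are the 1-forms $\vartheta^i=(S^i-\tfrac12 d_jS^{ji})\,dL$ on $\mathcal F^3_{(2)}E$. *)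

theory Defs
  imports "HOL-Analysis.Analysis"
begin

text \<open>A symmetric multi-index (i_1 ... i_s) with entries in {1,2} is determined by the
pair (a,b) = (number of 1s, number of 2s).  We only need orders s = a + b \<le> 3, since
all objects of the statement live on the third-order frame bundle.\<close>

typedef mi = "{(a::nat, b::nat). a + b \<le> 3}" morphisms mi_rep mi_abs
  by (rule exI[of _ "(0,0)"]) auto

instance mi :: finite
proof
  have fin: "finite {(a::nat, b::nat). a + b \<le> 3}"
    by (rule finite_subset[of _ "{0..3} \<times> {0..3}"]) auto
  have "(UNIV :: mi set) = mi_abs ` {(a::nat, b::nat). a + b \<le> 3}"
    using type_definition.Abs_image[OF type_definition_mi] by simp
  then show "finite (UNIV :: mi set)" using fin by (metis finite_imageI)
qed

definition mi_ord :: "mi \<Rightarrow> nat" where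
  "mi_ord m = fst (mi_rep m) + snd (mi_rep m)"

definition ms :: "nat list \<Rightarrow> mi" where
  "ms I = mi_abs (count_list I 1, count_list I 2)"

definition idx_lists :: "nat \<Rightarrow> nat list set" where
  "idx_lists s = {I. length I = s \<and> set I \<subseteq> {1, 2}}"

definition nperm :: "nat list \<Rightarrow> nat" where
  "nperm I = card {J. mset J = mset I}"

text \<open>Points of (a coordinate chart of) the third-order 2-frame bundle: the coordinate
u^alpha_I of the point x is  x $ (alpha, ms I);  'a indexes the coordinates of E
(so n = CARD('a)).  Functions on lower-order bundles are identified with their pull-backs.\<close>
type_synonym 'a pt = "real ^ ('a \<times> mi)"

definition regular_pt :: "'a::finite pt \<Rightarrow> bool" where
  "regular_pt x \<longleftrightarrow> (\<forall>a b :: real.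
      (\<forall>\<alpha>. a * x $ (\<alpha>, ms [1]) + b * x $ (\<alpha>, ms [2]) = 0) \<longrightarrow> a = 0 \<and> b = 0)"

definition pd :: "'c::finite \<Rightarrow> (real ^ 'c \<Rightarrow> real) \<Rightarrow> real ^ 'c \<Rightarrow> real" where
  "pd c f x = frechet_derivative f (at x) (axis c 1)"

primrec ck_on :: "nat \<Rightarrow> (real ^ 'c::finite) set \<Rightarrow> (real ^ 'c \<Rightarrow> real) \<Rightarrow> bool" where
  "ck_on 0 U f = continuous_on U f"
| "ck_on (Suc k) U f = (f differentiable_on U \<and> (\<forall>c. ck_on k U (pd c f)))"

definition smooth_on :: "(real ^ 'c::finite) set \<Rightarrow> (real ^ 'c \<Rightarrow> real) \<Rightarrow> bool" where
  "smooth_on U f \<longleftrightarrow> (\<forall>k. ck_on k U f)"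

text \<open>Vector fields, 1-forms and 2-forms are given by their components:
X = sum_c X x c * d/du_c,  omega = sum_c omega x c * du_c,
theta = (1/2) sum_{b,c} theta x b c * du_b wedge du_c  (theta x b c = theta(d/du_b, d/du_c)).\<close>
type_synonym 'c vf = "real ^ 'c \<Rightarrow> 'c \<Rightarrow> real"
type_synonym 'c form1 = "real ^ 'c \<Rightarrow> 'c \<Rightarrow> real"
type_synonym 'c form2 = "real ^ 'c \<Rightarrow> 'c \<Rightarrow> 'c \<Rightarrow> real"

definition dfun :: "(real ^ 'c::finite \<Rightarrow> real) \<Rightarrow> 'c form1" where
  "dfun f x c = pd c f x"

definition dform :: "'c::finite form1 \<Rightarrow> 'c form2" where
  "dform \<omega> x b c = pd b (\<lambda>y. \<omega> y c) x - pd c (\<lambda>y. \<omega> y b) x"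

definition ivf :: "'c::finite vf \<Rightarrow> 'c form1 \<Rightarrow> real ^ 'c \<Rightarrow> real" where
  "ivf X \<omega> x = (\<Sum>c\<in>UNIV. X x c * \<omega> x c)"

definition iform2 :: "'c::finite vf \<Rightarrow> 'c form2 \<Rightarrow> 'c form1" where
  "iform2 X \<theta> x c = (\<Sum>b\<in>UNIV. X x b * \<theta> x b c)"

definition lie_fun :: "'c::finite vf \<Rightarrow> (real ^ 'c \<Rightarrow> real) \<Rightarrow> real ^ 'c \<Rightarrow> real" where
  "lie_fun X f x = ivf X (dfun f) x"

definition lie_form :: "'c::finite vf \<Rightarrow> 'c form1 \<Rightarrow> 'c form1" where
  "lie_form X \<omega> x c = dfun (ivf X \<omega>) x c + iform2 X (dform \<omega>) x c"

text \<open>Total derivative T_i along F^{k+1} -> F^k (k \<le> 2):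
T_i = sum_{s=0}^k 1/#(i_1..i_s) u^alpha_{i i_1..i_s} d/du^alpha_{i_1..i_s}.\<close>
definition Tvf :: "nat \<Rightarrow> nat \<Rightarrow> ('a::finite \<times> mi) vf" where
  "Tvf k i x c = (\<Sum>s\<le>k. \<Sum>I\<in>idx_lists s. \<Sum>\<alpha>\<in>UNIV.
      (1 / real (nperm I)) * x $ (\<alpha>, ms (i # I)) * (if c = (\<alpha>, ms I) then 1 else 0))"

text \<open>Vertical endomorphism S^j on F^{k+1} (k \<le> 2) as a matrix: the (1,1) tensor
sum_{s=0}^k (s+1)/#(j i_1..i_s) d/du^alpha_{j i_1..i_s} (x) du^alpha_{i_1..i_s},
i.e. S^j(d/du_I) = (s+1) #(I)/#(jI) d/du_{jI}.
Smat k j tgt src is the coefficient of d/du_tgt (x) du_src.\<close>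
definition Smat :: "nat \<Rightarrow> nat \<Rightarrow> ('a::finite \<times> mi) \<Rightarrow> ('a \<times> mi) \<Rightarrow> real" where
  "Smat k j tgt src = (\<Sum>s\<le>k. \<Sum>I\<in>idx_lists s. \<Sum>\<alpha>\<in>UNIV.
      (real (s + 1) / real (nperm (j # I)))
        * (if tgt = (\<alpha>, ms (j # I)) then 1 else 0) * (if src = (\<alpha>, ms I) then 1 else 0))"

definition Svf :: "nat \<Rightarrow> nat \<Rightarrow> ('a::finite \<times> mi) vf \<Rightarrow> ('a \<times> mi) vf" where
  "Svf k j X x tgt = (\<Sum>src\<in>UNIV. Smat k j tgt src * X x src)"

definition Sform :: "nat \<Rightarrow> nat \<Rightarrow> ('a::finite \<times> mi) form1 \<Rightarrow> ('a \<times> mi) form1" where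
  "Sform k j \<omega> x src = (\<Sum>tgt\<in>UNIV. \<omega> x tgt * Smat k j tgt src)"

primrec Svfs :: "nat \<Rightarrow> nat list \<Rightarrow> ('a::finite \<times> mi) vf \<Rightarrow> ('a \<times> mi) vf" where
  "Svfs k [] X = X"
| "Svfs k (j # J) X = Svf k j (Svfs k J X)"

primrec Sforms :: "nat \<Rightarrow> nat list \<Rightarrow> ('a::finite \<times> mi) form1 \<Rightarrow> ('a \<times> mi) form1" where
  "Sforms k [] \<omega> = \<omega>"
| "Sforms k (j # J) \<omega> = Sform k j (Sforms k J \<omega>)"

definition Delta :: "nat \<Rightarrow> nat list \<Rightarrow> nat \<Rightarrow> ('a::finite \<times> mi) vf" where
  "Delta k I i = Svfs k I (Tvf k i)"

text \<open>L is a smooth function on an open subset of F^2 (here: on its preimage U in F^3,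
L not depending on the third-order coordinates).\<close>
definition second_order_lagrangian :: "'a::finite pt set \<Rightarrow> ('a pt \<Rightarrow> real) \<Rightarrow> bool" where
  "second_order_lagrangian U L \<longleftrightarrow>
     open U \<and> U \<subseteq> {x. regular_pt x} \<and> smooth_on U L \<and>
     (\<forall>x\<in>U. \<forall>y. (\<forall>\<alpha> m. mi_ord m \<le> 2 \<longrightarrow> y $ (\<alpha>, m) = x $ (\<alpha>, m)) \<longrightarrow> y \<in> U \<and> L y = L x)"

text \<open>Homogeneity: d^i_j L = delta^i_j L and d^{ik}_j L = 0 (fundamental fields on F^2, k = 1).\<close>
definition homogeneous :: "'a::finite pt set \<Rightarrow> ('a pt \<Rightarrow> real) \<Rightarrow> bool" where
  "homogeneous U L \<longleftrightarrow>
     (\<forall>x\<in>U. \<forall>i\<in>{1,2}. \<forall>j\<in>{1,2}.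
        lie_fun (Delta 1 [i] j) L x = (if i = j then L x else 0) \<and>
        (\<forall>k\<in>{1,2}. lie_fun (Delta 1 [i, k] j) L x = 0))"

text \<open>Hilbert forms theta^i = (S^i - 1/2 d_j S^{ji}) dL; S acts on forms on F^2 (k = 1) and
d_j is the Lie derivative along T_j : F^3 -> F^2 (k = 2), summed over j.\<close>
definition hilbert_form :: "('a::finite pt \<Rightarrow> real) \<Rightarrow> nat \<Rightarrow> ('a \<times> mi) form1" where
  "hilbert_form L i x c =
     Sforms 1 [i] (dfun L) x c
     - (1/2) * (\<Sum>j\<in>{1,2}. lie_form (Tvf 2 j) (Sforms 1 [j, i] (dfun L)) x c)"

end

theory Submission
  imports Defs "HOL-Combinatorics.Multiset_Permutations"
begin

definition Pset :: "(nat \<times> nat) set" where "Pset = {(a,b). a + b \<le> 3}"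

lemma Pset_cases:
  assumes "p \<in> Pset" "P (0,0)" "P (1,0)" "P (0,1)" "P (2,0)" "P (1,1)" "P (0,2)"
    "P (3,0)" "P (2,1)" "P (1,2)" "P (0,3)"
  shows "P p"
proof -
  obtain a b where p: "p = (a,b)" "a + b \<le> 3" using assms(1) by (auto simp: Pset_def)
  then have "(a=0\<and>b=0) \<or> (a=1\<and>b=0) \<or> (a=0\<and>b=1) \<or> (a=2\<and>b=0) \<or> (a=1\<and>b=1) \<or> (a=0\<and>b=2)
    \<or> (a=3\<and>b=0) \<or> (a=2\<and>b=1) \<or> (a=1\<and>b=2) \<or> (a=0\<and>b=3)" by arith
  then show ?thesis using assms p by (elim disjE) auto
qed

lemma Pset_explicit: "Pset = {(0,0),(1,0),(0,1),(2,0),(1,1),(0,2),(3,0),(2,1),(1,2),(0,3)}"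
proof (intro set_eqI iffI)
  fix p assume "p \<in> Pset" then show "p \<in> {(0,0),(1,0),(0,1),(2,0),(1,1),(0,2),(3,0),(2,1),(1,2),(0,3)}"
    by (rule Pset_cases) simp_all
qed (auto simp: Pset_def)

lemma rep_in: "mi_rep B \<in> Pset"
  using mi_rep unfolding Pset_def by simp

lemma rep_abs: "p \<in> Pset \<Longrightarrow> mi_rep (mi_abs p) = p"
  by (simp add: mi_abs_inverse Pset_def)

lemma count_le: "set (I::nat list) \<subseteq> {1,2} \<Longrightarrow> count_list I 1 + count_list I 2 = length I"
  by (induction I) auto

lemma ms_rep: "set I \<subseteq> {1,2} \<Longrightarrow> length I \<le> 3 \<Longrightarrow> mi_rep (ms I) = (count_list I 1, count_list I 2)"
  unfolding ms_def by (rule rep_abs) (use count_le[of I] in \<open>auto simp: Pset_def\<close>)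

lemma ms_eq_iff: "set I \<subseteq> {1,2} \<Longrightarrow> length I \<le> 3 \<Longrightarrow> (B = ms I) = (mi_rep B = (count_list I 1, count_list I 2))"
  by (metis mi_rep_inject ms_rep)

lemma idx0: "idx_lists 0 = {[]}" by (auto simp: idx_lists_def)
lemma idx1: "idx_lists 1 = {[1],[2]}"
  by (auto simp: idx_lists_def length_Suc_conv)
lemma idx2: "idx_lists 2 = {[1,1],[1,2],[2,1],[2,2]}"
  by (auto simp: idx_lists_def length_Suc_conv numeral_2_eq_2)

lemma nperm_eq: "nperm I = fact (length I) div (\<Prod>x\<in>set_mset (mset I). fact (count (mset I) x))"
  unfolding nperm_def using card_permutations_of_multiset(1)[of "mset I"]
  by (simp add: permutations_of_multiset_def)

lemma nperm_mset: "mset I = mset J \<Longrightarrow> nperm I = nperm J"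
  unfolding nperm_def by simp

lemma nperms0:
  "nperm [] = 1" "nperm [1] = 1" "nperm [2] = 1"
  "nperm [1,1] = 1" "nperm [1,2] = 2" "nperm [2,2] = 1"
  "nperm [1,1,1] = 1" "nperm [1,1,2] = 3" 
  "nperm [2,2,2] = 1" "nperm [1,2,2] = 3"
  by (simp add: nperm_eq fact_numeral, presburger?)+

lemma nperms: 
  "nperm [] = 1" "nperm [1] = 1" "nperm [2] = 1"
  "nperm [1,1] = 1" "nperm [1,2] = 2" "nperm [2,1] = 2" "nperm [2,2] = 1"
  "nperm [1,1,1] = 1" "nperm [1,1,2] = 3" "nperm [1,2,1] = 3" "nperm [2,1,1] = 3"
  "nperm [2,2,2] = 1" "nperm [2,2,1] = 3" "nperm [2,1,2] = 3" "nperm [1,2,2] = 3"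
  using nperms0 nperm_mset[of "[2,1]" "[1,2]"] nperm_mset[of "[1,2,1]" "[1,1,2]"]
    nperm_mset[of "[2,1,1]" "[1,1,2]"] nperm_mset[of "[2,2,1]" "[1,2,2]"] nperm_mset[of "[2,1,2]" "[1,2,2]"]
  by simp_all

definition lin :: "('c::finite \<Rightarrow> 'c \<Rightarrow> real) \<Rightarrow> real ^ 'c \<Rightarrow> 'c \<Rightarrow> real" where
  "lin A x c = (\<Sum>d\<in>UNIV. A c d * x $ d)"

definition mm :: "('c::finite \<Rightarrow> 'c \<Rightarrow> real) \<Rightarrow> ('c \<Rightarrow> 'c \<Rightarrow> real) \<Rightarrow> 'c \<Rightarrow> 'c \<Rightarrow> real" where
  "mm A B u v = (\<Sum>w\<in>UNIV. A u w * B w v)"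

definition TMat :: "nat \<Rightarrow> nat \<Rightarrow> ('a::finite \<times> mi) \<Rightarrow> ('a \<times> mi) \<Rightarrow> real" where
  "TMat k j u v = (\<Sum>s\<le>k. \<Sum>I\<in>idx_lists s. \<Sum>\<alpha>\<in>UNIV.
      (1 / real (nperm I)) * (if v = (\<alpha>, ms (j # I)) then 1 else 0) * (if u = (\<alpha>, ms I) then 1 else 0))"

lemma sum_mult_right_swap: "finite S \<Longrightarrow> (\<Sum>d\<in>UNIV. (\<Sum>t\<in>S. f t d) * (y d::real)) = (\<Sum>t\<in>S. \<Sum>d\<in>UNIV. f t d * y d)"
  by (simp add: sum_distrib_right sum.swap[of _ S])

lemma delta_sum: "(\<Sum>d\<in>UNIV. a * (if d = p then 1 else 0) * b * (x::real^'c::finite) $ d) = a * b * x $ p"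
proof -
  have eq: "(\<lambda>d. a * (if d = p then 1 else 0) * b * x $ d) = (\<lambda>d. if d = p then a * b * x $ p else 0)"
    by auto
  show ?thesis unfolding eq by simp
qed

lemma Tvf_lin: "Tvf k j = lin (TMat k j)"
proof (intro ext)
  fix x :: "'a::finite pt" and c
  have fin: "finite (idx_lists s)" for s
  proof -
    have "idx_lists s \<subseteq> {I. set I \<subseteq> {1,2} \<and> length I = s}" by (auto simp: idx_lists_def)
    then show ?thesis using finite_lists_length_eq[of "{1::nat,2}" s] by (rule finite_subset) simp
  qed
  have "lin (TMat k j) x c = (\<Sum>s\<le>k. \<Sum>I\<in>idx_lists s. \<Sum>\<alpha>\<in>UNIV. \<Sum>d\<in>UNIV.
      (1 / real (nperm I)) * (if d = (\<alpha>, ms (j # I)) then 1 else 0) * (if c = (\<alpha>, ms I) then 1 else 0) * x $ d)"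
    unfolding lin_def TMat_def
    by (simp add: sum_mult_right_swap fin)
  also have "\<dots> = Tvf k j x c"
    unfolding Tvf_def
    by (intro sum.cong refl) (simp only: delta_sum, simp)
  finally show "Tvf k j x c = lin (TMat k j) x c" by simp
qed

lemma Svf_lin: "Svf k j (lin A) = lin (mm (Smat k j) A)"
proof (intro ext)
  fix x :: "'a::finite pt" and t
  show "Svf k j (lin A) x t = lin (mm (Smat k j) A) x t"
  proof -
    have "Svf k j (lin A) x t = (\<Sum>src\<in>UNIV. \<Sum>d\<in>UNIV. Smat k j t src * A src d * x $ d)"
      unfolding Svf_def lin_def by (simp add: sum_distrib_left mult.assoc)
    also have "\<dots> = (\<Sum>d\<in>UNIV. \<Sum>src\<in>UNIV. Smat k j t src * A src d * x $ d)"
      by (rule sum.swap)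
    also have "\<dots> = lin (mm (Smat k j) A) x t"
      unfolding lin_def mm_def by (simp add: sum_distrib_right)
    finally show ?thesis .
  qed
qed

lemma Delta_lin: "Delta k [i] l = lin (mm (Smat k i) (TMat k l))"
  unfolding Delta_def by (simp add: Tvf_lin Svf_lin)

definition dg :: "(nat \<times> nat \<Rightarrow> nat \<times> nat \<Rightarrow> real) \<Rightarrow> ('a \<times> mi) \<Rightarrow> ('a \<times> mi) \<Rightarrow> real" where
  "dg a u v = (if fst u = fst v then a (mi_rep (snd u)) (mi_rep (snd v)) else 0)"

definition pm :: "(nat \<times> nat \<Rightarrow> nat \<times> nat \<Rightarrow> real) \<Rightarrow> (nat \<times> nat \<Rightarrow> nat \<times> nat \<Rightarrow> real) \<Rightarrow> nat \<times> nat \<Rightarrow> nat \<times> nat \<Rightarrow> real" where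
  "pm a b p q = (\<Sum>r\<in>Pset. a p r * b r q)"

lemma sum_mi: "(\<Sum>C\<in>UNIV. g (mi_rep C)) = (\<Sum>r\<in>Pset. g r)"
proof -
  have im: "mi_rep ` UNIV = Pset"
    using type_definition.Rep_range[OF type_definition_mi] by (simp add: Pset_def)
  have "inj mi_rep" by (meson injI mi_rep_inject)
  then show ?thesis using sum.reindex[of mi_rep UNIV g] im by simp
qed

lemma sum_pair: "(\<Sum>w\<in>UNIV. f w) = (\<Sum>\<gamma>\<in>UNIV. \<Sum>C\<in>UNIV. f (\<gamma>, C))"
  for f :: "'a::finite \<times> 'b::finite \<Rightarrow> real"
  by (simp add: sum.cartesian_product UNIV_Times_UNIV[symmetric] del: UNIV_Times_UNIV)

lemma mm_dg: "mm (dg a) (dg b) = (dg (pm a b) :: ('a::finite \<times> mi) \<Rightarrow> _)"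
proof (intro ext)
  fix u v :: "'a \<times> mi"
  have "mm (dg a) (dg b) u v = (\<Sum>\<gamma>\<in>UNIV. \<Sum>C\<in>UNIV. dg a u (\<gamma>, C) * dg b (\<gamma>, C) v)"
    unfolding mm_def by (rule sum_pair)
  also have "\<dots> = (\<Sum>\<gamma>\<in>UNIV. if \<gamma> = fst u then (\<Sum>C\<in>UNIV. dg a u (\<gamma>, C) * dg b (\<gamma>, C) v) else 0)"
    by (intro sum.cong refl) (auto simp: dg_def)
  also have "\<dots> = (\<Sum>C\<in>UNIV. dg a u (fst u, C) * dg b (fst u, C) v)"
    by simp
  also have "\<dots> = (if fst u = fst v then (\<Sum>C\<in>UNIV. a (mi_rep (snd u)) (mi_rep C) * b (mi_rep C) (mi_rep (snd v))) else 0)"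
    by (auto simp: dg_def)
  also have "\<dots> = dg (pm a b) u v"
    unfolding dg_def pm_def by (simp add: sum_mi[of "\<lambda>r. a (mi_rep (snd u)) r * b r (mi_rep (snd v))"])
  finally show "mm (dg a) (dg b) u v = dg (pm a b) u v" .
qed

lemma alpha_sum: "(\<Sum>\<alpha>\<in>UNIV. c * (if v = (\<alpha>, X) then 1 else 0) * (if u = (\<alpha>, Y) then 1 else 0)) =
   (if fst u = fst v \<and> snd v = X \<and> snd u = Y then (c::real) else 0)"
  for u :: "'a::finite \<times> 'b"
proof -
  have eq: "(\<lambda>\<alpha>. c * (if v = (\<alpha>, X) then 1 else 0) * (if u = (\<alpha>, Y) then 1 else 0)) =
     (\<lambda>\<alpha>. if \<alpha> = fst v then (if fst u = fst v \<and> snd v = X \<and> snd u = Y then c else 0) else 0)"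
    by (auto simp: prod_eq_iff)
  show ?thesis unfolding eq sum.delta by simp
qed

definition tmraw :: "nat \<Rightarrow> nat \<Rightarrow> nat \<times> nat \<Rightarrow> nat \<times> nat \<Rightarrow> real" where
  "tmraw k j p q = (\<Sum>s\<le>k. \<Sum>I\<in>idx_lists s. (1 / real (nperm I)) *
     (if q = (count_list (j#I) 1, count_list (j#I) 2) \<and> p = (count_list I 1, count_list I 2) then 1 else 0))"

definition smraw :: "nat \<Rightarrow> nat \<Rightarrow> nat \<times> nat \<Rightarrow> nat \<times> nat \<Rightarrow> real" where
  "smraw k j p q = (\<Sum>s\<le>k. \<Sum>I\<in>idx_lists s. (real (s + 1) / real (nperm (j # I))) *
     (if p = (count_list (j#I) 1, count_list (j#I) 2) \<and> q = (count_list I 1, count_list I 2) then 1 else 0))"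

lemma TMat_raw: "k \<le> 2 \<Longrightarrow> j \<in> {1,2} \<Longrightarrow> TMat k j = dg (tmraw k j)"
proof (intro ext)
  fix u v :: "'a::finite \<times> mi"
  assume k: "k \<le> 2" and j: "j \<in> {1,2}"
  have "TMat k j u v = (\<Sum>s\<le>k. \<Sum>I\<in>idx_lists s. if fst u = fst v then (1 / real (nperm I)) *
     (if mi_rep (snd v) = (count_list (j#I) 1, count_list (j#I) 2) \<and> mi_rep (snd u) = (count_list I 1, count_list I 2) then 1 else 0) else 0)"
    unfolding TMat_def alpha_sum
  proof (intro sum.cong refl)
    fix s I assume "s \<in> {..k}" "I \<in> idx_lists s"
    then have "set I \<subseteq> {1,2}" "length I \<le> 2" "set (j#I) \<subseteq> {1,2}" "length (j#I) \<le> 3"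
      using k j by (auto simp: idx_lists_def)
    then show "(if fst u = fst v \<and> snd v = ms (j # I) \<and> snd u = ms I then 1 / real (nperm I) else 0) =
      (if fst u = fst v then (1 / real (nperm I)) *
     (if mi_rep (snd v) = (count_list (j#I) 1, count_list (j#I) 2) \<and> mi_rep (snd u) = (count_list I 1, count_list I 2) then 1 else 0) else 0)"
      using ms_eq_iff[of I "snd u"] ms_eq_iff[of "j#I" "snd v"] by auto
  qed
  also have "\<dots> = dg (tmraw k j) u v"
    unfolding dg_def tmraw_def by (auto intro!: sum.cong)
  finally show "TMat k j u v = dg (tmraw k j) u v" .
qed

lemma Smat_raw: "k \<le> 2 \<Longrightarrow> j \<in> {1,2} \<Longrightarrow> (Smat k j :: ('a::finite \<times> mi) \<Rightarrow> _) = dg (smraw k j)"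
proof (intro ext)
  fix u v :: "'a::finite \<times> mi"
  assume k: "k \<le> 2" and j: "j \<in> {1,2}"
  have "Smat k j u v = (\<Sum>s\<le>k. \<Sum>I\<in>idx_lists s. if fst u = fst v then (real (s + 1) / real (nperm (j # I))) *
     (if mi_rep (snd u) = (count_list (j#I) 1, count_list (j#I) 2) \<and> mi_rep (snd v) = (count_list I 1, count_list I 2) then 1 else 0) else 0)"
    unfolding Smat_def alpha_sum
  proof (intro sum.cong refl)
    fix s I assume "s \<in> {..k}" "I \<in> idx_lists s"
    then have "set I \<subseteq> {1,2}" "length I \<le> 2" "set (j#I) \<subseteq> {1,2}" "length (j#I) \<le> 3"
      using k j by (auto simp: idx_lists_def)
    then show "(if fst v = fst u \<and> snd u = ms (j # I) \<and> snd v = ms I then real (s + 1) / real (nperm (j # I)) else 0) =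
      (if fst u = fst v then (real (s + 1) / real (nperm (j # I))) *
     (if mi_rep (snd u) = (count_list (j#I) 1, count_list (j#I) 2) \<and> mi_rep (snd v) = (count_list I 1, count_list I 2) then 1 else 0) else 0)"
      using ms_eq_iff[of I "snd v"] ms_eq_iff[of "j#I" "snd u"] by auto
  qed
  also have "\<dots> = dg (smraw k j) u v"
    unfolding dg_def smraw_def by (auto intro!: sum.cong)
  finally show "Smat k j u v = dg (smraw k j) u v" .
qed


definition nx :: "nat \<Rightarrow> nat \<times> nat \<Rightarrow> nat \<times> nat" where
  "nx j p = (if j = 1 then (fst p + 1, snd p) else (fst p, snd p + 1))"
definition pv :: "nat \<Rightarrow> nat \<times> nat \<Rightarrow> nat \<times> nat" where
  "pv j p = (if j = 1 then (fst p - 1, snd p) else (fst p, snd p - 1))"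
definition cj :: "nat \<Rightarrow> nat \<times> nat \<Rightarrow> nat" where
  "cj j p = (if j = 1 then fst p else snd p)"
definition tm :: "nat \<Rightarrow> nat \<Rightarrow> nat \<times> nat \<Rightarrow> nat \<times> nat \<Rightarrow> real" where
  "tm k j p q = (if fst p + snd p \<le> k \<and> q = nx j p then 1 else 0)"
definition sm :: "nat \<Rightarrow> nat \<Rightarrow> nat \<times> nat \<Rightarrow> nat \<times> nat \<Rightarrow> real" where
  "sm k j p q = (if fst q + snd q \<le> k \<and> p = nx j q then real (cj j q + 1) else 0)"

lemma sum_idx2: "(\<Sum>s\<le>2. \<Sum>I\<in>idx_lists s. g s I) = g 0 [] + g 1 [1] + g 1 [2] + g 2 [1,1] + g 2 [1,2] + g 2 [2,1] + g 2 [2,2]"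
proof -
  have "{..2::nat} = {0,1,2}" by auto
  then show ?thesis by (simp add: idx0 idx1 idx1[simplified] idx2 idx2[simplified] add.assoc)
qed
lemma sum_idx1: "(\<Sum>s\<le>1. \<Sum>I\<in>idx_lists s. g s I) = g 0 [] + g 1 [1] + g 1 [2]"
proof -
  have "{..1::nat} = {0,1}" by auto
  then show ?thesis by (simp add: idx0 idx1 idx1[simplified] add.assoc)
qed
lemmas nperms' = nperms nperms[simplified]

lemma j12: "j \<in> {1,2} \<Longrightarrow> (j = (1::nat) \<Longrightarrow> P) \<Longrightarrow> (j = 2 \<Longrightarrow> P) \<Longrightarrow> P" by auto

lemma tm_raw_c: assumes "p \<in> Pset" shows "tmraw 1 1 p q = tm 1 1 p q \<and> tmraw 1 2 p q = tm 1 2 p q \<and>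
    tmraw 2 1 p q = tm 2 1 p q \<and> tmraw 2 2 p q = tm 2 2 p q"
  unfolding tmraw_def sum_idx1 sum_idx2
  by (rule Pset_cases[OF assms, where P = "\<lambda>p. _ p"]; simp add: sum_idx1 sum_idx2 nperms' tm_def nx_def)

lemma tm_raw: assumes "k \<in> {1,2}" "j \<in> {1,2}" "p \<in> Pset" shows "tmraw k j p q = tm k j p q"
  using assms tm_raw_c[OF assms(3), of q] by auto

lemma sm_raw_c: assumes "q \<in> Pset" shows "smraw 1 1 p q = sm 1 1 p q \<and> smraw 1 2 p q = sm 1 2 p q \<and>
    smraw 2 1 p q = sm 2 1 p q \<and> smraw 2 2 p q = sm 2 2 p q"
  unfolding smraw_def sum_idx1 sum_idx2
  by (rule Pset_cases[OF assms, where P = "\<lambda>q. _ q"]; simp add: sum_idx1 sum_idx2 nperms' sm_def nx_def cj_def)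

lemma sm_raw: assumes "k \<in> {1,2}" "j \<in> {1,2}" "q \<in> Pset" shows "smraw k j p q = sm k j p q"
  using assms sm_raw_c[OF assms(3), of p] by auto

lemma pm_expand: "pm a b p q = a p (0,0) * b (0,0) q + a p (1,0) * b (1,0) q + a p (0,1) * b (0,1) q
  + a p (2,0) * b (2,0) q + a p (1,1) * b (1,1) q + a p (0,2) * b (0,2) q
  + a p (3,0) * b (3,0) q + a p (2,1) * b (2,1) q + a p (1,2) * b (1,2) q + a p (0,3) * b (0,3) q"
  unfolding pm_def Pset_explicit by (simp add: algebra_simps)

definition ddc :: "nat \<Rightarrow> nat \<Rightarrow> nat \<times> nat \<Rightarrow> nat \<times> nat \<Rightarrow> real" where
  "ddc i l p q = (if 1 \<le> cj i p \<and> q = nx l (pv i p) then real (cj i p) else 0)"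

lemma PL3_all: assumes "p \<in> Pset" "q \<in> Pset"
  shows "\<forall>i\<in>{1,2}. \<forall>l\<in>{1,2}. \<forall>j\<in>{1,2}.
    pm (tm 2 j) (ddc i l) p q - pm (ddc i l) (tm 2 j) p q = (if i = j then tm 2 l p q else 0)"
  by (rule Pset_cases[OF assms(1), where P = "\<lambda>p. _ p"]; rule Pset_cases[OF assms(2), where P = "\<lambda>q. _ q"];
      simp add: pm_expand tm_def ddc_def nx_def pv_def cj_def)

lemma dd_all: assumes "p \<in> Pset" "q \<in> Pset"
  shows "\<forall>i\<in>{1,2}. \<forall>l\<in>{1,2}. pm (sm 2 i) (tm 2 l) p q = ddc i l p q \<and>
     (fst p + snd p \<le> 2 \<longrightarrow> pm (sm 1 i) (tm 1 l) p q = ddc i l p q)"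
  by (rule Pset_cases[OF assms(1), where P = "\<lambda>p. _ p"]; rule Pset_cases[OF assms(2), where P = "\<lambda>q. _ q"];
      simp add: pm_expand tm_def sm_def ddc_def nx_def pv_def cj_def)

definition q2c :: "nat \<Rightarrow> nat \<Rightarrow> nat \<times> nat \<Rightarrow> nat \<times> nat \<Rightarrow> real" where
  "q2c m j p q = (if q = (0,0) \<and> p = nx m (nx j (0,0)) then (if m = j then 2 else 1) else 0)"
definition qtc :: "nat \<Rightarrow> nat \<Rightarrow> nat \<times> nat \<Rightarrow> nat \<times> nat \<Rightarrow> real" where
  "qtc m j p q = (if q = nx j (0,0) \<and> p = nx m (nx j (0,0)) then (if m = j then 2 else 1) else 0)"
definition rrc :: "nat \<Rightarrow> nat \<times> nat \<Rightarrow> nat \<times> nat \<Rightarrow> real" where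
  "rrc m p q = sm 1 m p q - 1/2 * (qtc m 1 p q + qtc m 2 p q)"

lemma q2_all: assumes "p \<in> Pset" "q \<in> Pset"
  shows "\<forall>m\<in>{1,2}. \<forall>j\<in>{1,2}. pm (sm 1 m) (sm 1 j) p q = q2c m j p q \<and>
     pm (q2c m j) (tm 2 j) p q = qtc m j p q"
  by (rule Pset_cases[OF assms(1), where P = "\<lambda>p. _ p"]; rule Pset_cases[OF assms(2), where P = "\<lambda>q. _ q"];
      simp add: pm_expand tm_def sm_def q2c_def qtc_def nx_def pv_def cj_def)

lemma PL1_all: assumes "p \<in> Pset" "q \<in> Pset"
  shows "\<forall>i\<in>{1,2}. \<forall>l\<in>{1,2}. \<forall>m\<in>{1,2}.
    pm (rrc m) (ddc i l) p q - pm (ddc i l) (rrc m) p q = - (if m = l then rrc i p q else 0)"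
  by (rule Pset_cases[OF assms(1), where P = "\<lambda>p. _ p"]; rule Pset_cases[OF assms(2), where P = "\<lambda>q. _ q"];
      simp add: pm_expand rrc_def qtc_def sm_def ddc_def nx_def pv_def cj_def)

lemma PL2_all: assumes "p \<in> Pset" "q \<in> Pset"
  shows "\<forall>i\<in>{1,2}. \<forall>l\<in>{1,2}. \<forall>m\<in>{1,2}. \<forall>j\<in>{1,2}.
    pm (q2c m j) (ddc i l) p q - pm (ddc i l) (q2c m j) p q =
      - ((if j = l then q2c m i p q else 0) + (if m = l then q2c i j p q else 0))"
  by (rule Pset_cases[OF assms(1), where P = "\<lambda>p. _ p"]; rule Pset_cases[OF assms(2), where P = "\<lambda>q. _ q"];
      simp add: pm_expand q2c_def ddc_def nx_def pv_def cj_def)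


lemma pd_has: "(f has_derivative f') (at x) \<Longrightarrow> pd c f x = f' (axis c 1)"
  unfolding pd_def by (simp add: frechet_derivative_at[symmetric])

lemma pd_works: "f differentiable at x \<Longrightarrow> (f has_derivative frechet_derivative f (at x)) (at x)"
  by (simp add: frechet_derivative_works)

lemma pd_mult: "f differentiable at x \<Longrightarrow> g differentiable at x \<Longrightarrow>
   pd c (\<lambda>y. f y * g y) x = pd c f x * g x + f x * pd c g x"
  for f g :: "real ^ 'c::finite \<Rightarrow> real"
proof -
  assume f: "f differentiable at x" and g: "g differentiable at x"
  have h: "((\<lambda>y. f y * g y) has_derivative (\<lambda>h. f x * frechet_derivative g (at x) h + frechet_derivative f (at x) h * g x)) (at x)"
    by (rule has_derivative_mult[OF pd_works[OF f] pd_works[OF g]])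
  show ?thesis using pd_has[OF h] by (simp add: pd_def)
qed

lemma pd_sum: "finite S \<Longrightarrow> (\<And>k. k \<in> S \<Longrightarrow> f k differentiable at x) \<Longrightarrow>
   pd c (\<lambda>y. \<Sum>k\<in>S. f k y) x = (\<Sum>k\<in>S. pd c (f k) x)"
  for f :: "'k \<Rightarrow> real ^ 'c::finite \<Rightarrow> real"
proof -
  assume S: "finite S" and f: "\<And>k. k \<in> S \<Longrightarrow> f k differentiable at x"
  have h: "((\<lambda>y. \<Sum>k\<in>S. f k y) has_derivative (\<lambda>h. \<Sum>k\<in>S. frechet_derivative (f k) (at x) h)) (at x)"
    by (rule has_derivative_sum) (use pd_works f in auto)
  show ?thesis using pd_has[OF h] by (simp add: pd_def)
qed

lemma pd_add: "f differentiable at x \<Longrightarrow> g differentiable at x \<Longrightarrow>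
   pd c (\<lambda>y. f y + g y) x = pd c f x + pd c g x"
  for f g :: "real ^ 'c::finite \<Rightarrow> real"
proof -
  assume f: "f differentiable at x" and g: "g differentiable at x"
  have h: "((\<lambda>y. f y + g y) has_derivative (\<lambda>h. frechet_derivative f (at x) h + frechet_derivative g (at x) h)) (at x)"
    by (rule has_derivative_add[OF pd_works[OF f] pd_works[OF g]])
  show ?thesis using pd_has[OF h] by (simp add: pd_def)
qed

lemma pd_diff: "f differentiable at x \<Longrightarrow> g differentiable at x \<Longrightarrow>
   pd c (\<lambda>y. f y - g y) x = pd c f x - pd c g x"
  for f g :: "real ^ 'c::finite \<Rightarrow> real"
proof -
  assume f: "f differentiable at x" and g: "g differentiable at x"
  have h: "((\<lambda>y. f y - g y) has_derivative (\<lambda>h. frechet_derivative f (at x) h - frechet_derivative g (at x) h)) (at x)"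
    by (rule has_derivative_diff[OF pd_works[OF f] pd_works[OF g]])
  show ?thesis using pd_has[OF h] by (simp add: pd_def)
qed

lemma pd_cmult: "f differentiable at x \<Longrightarrow> pd c (\<lambda>y. a * f y) x = a * pd c f x"
  for f :: "real ^ 'c::finite \<Rightarrow> real"
  using pd_mult[of "\<lambda>y. a" x f c] by (simp add: pd_has[OF has_derivative_const])

lemma pd_const: "pd c (\<lambda>y. a) x = 0"
  by (simp add: pd_has[OF has_derivative_const])

lemma lin_has: "((\<lambda>y. lin A y b) has_derivative (\<lambda>h. lin A h b)) (at x)"
proof -
  have "bounded_linear (\<lambda>h. lin A h b)"
    unfolding lin_def
    by (intro bounded_linear_sum bounded_linear_const_mult bounded_linear_vec_nth)
  then show ?thesis using bounded_linear.has_derivative[OF _ has_derivative_ident] by blast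
qed

lemma lin_diff [simp]: "(\<lambda>y. lin A y b) differentiable at x"
  using lin_has differentiable_def by blast

lemma pd_lin: "pd c (\<lambda>y. lin A y b) x = A b c"
proof -
  have "lin A (axis c 1) b = A b c"
    unfolding lin_def axis_def
    by (simp add: if_distrib cong: if_cong)
  moreover have "pd c (\<lambda>y. lin A y b) x = lin A (axis c 1) b" by (rule pd_has[OF lin_has])
  ultimately show ?thesis by simp
qed

lemma pd_cong: "f differentiable at x \<Longrightarrow> open U \<Longrightarrow> x \<in> U \<Longrightarrow> (\<And>y. y \<in> U \<Longrightarrow> f y = g y) \<Longrightarrow>
   pd c f x = pd c g x"
  unfolding pd_def using frechet_derivative_transform_within_open by metis

lemma pd_zero_on: "open U \<Longrightarrow> x \<in> U \<Longrightarrow> (\<And>y. y \<in> U \<Longrightarrow> g y = 0) \<Longrightarrow> pd c g x = 0"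
  using pd_cong[of "\<lambda>y. 0" x U g c] pd_const[of c 0 x] by (simp add: differentiable_const)

lemma smooth_pd: "smooth_on U f \<Longrightarrow> smooth_on U (pd c f)"
  unfolding smooth_on_def by (metis ck_on.simps(2))

lemma smooth_diff: "smooth_on U f \<Longrightarrow> open U \<Longrightarrow> x \<in> U \<Longrightarrow> f differentiable at x"
  unfolding smooth_on_def by (metis ck_on.simps(2) differentiable_on_eq_differentiable_at)

lemma smooth_cont: "smooth_on U f \<Longrightarrow> continuous_on U f"
  unfolding smooth_on_def by (metis ck_on.simps(1))

lemma dir_deriv:
  fixes g :: "real ^ 'c::finite \<Rightarrow> real"
  assumes "g differentiable at (y0 + t0 *\<^sub>R v)"
  shows "((\<lambda>t. g (y0 + t *\<^sub>R v)) has_real_derivative frechet_derivative g (at (y0 + t0 *\<^sub>R v)) v) (at t0)"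
proof -
  define G where "G = frechet_derivative g (at (y0 + t0 *\<^sub>R v))"
  have h1: "((\<lambda>t. y0 + t *\<^sub>R v) has_derivative (\<lambda>h. h *\<^sub>R v)) (at t0)"
    by (auto intro!: derivative_eq_intros)
  have h2: "(g has_derivative G) (at (y0 + t0 *\<^sub>R v))"
    unfolding G_def using assms by (rule pd_works)
  have "((\<lambda>t. g (y0 + t *\<^sub>R v)) has_derivative (\<lambda>h. G (h *\<^sub>R v))) (at t0)"
    using diff_chain_at[OF h1 h2] by (simp add: o_def)
  moreover have "(\<lambda>h. G (h *\<^sub>R v)) = (*) (G v)"
    using linear_cmul[OF has_derivative_linear[OF h2]] by (auto simp: mult.commute)
  ultimately show ?thesis by (simp add: has_field_derivative_def G_def)
qed

lemma dir_deriv_pd: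
  fixes g :: "real ^ 'c::finite \<Rightarrow> real"
  assumes "g differentiable at (y0 + t0 *\<^sub>R axis c 1)"
  shows "((\<lambda>t. g (y0 + t *\<^sub>R axis c 1)) has_real_derivative pd c g (y0 + t0 *\<^sub>R axis c 1)) (at t0)"
  using dir_deriv[OF assms] unfolding pd_def .

lemma norm_two_axis: "norm (s *\<^sub>R axis a (1::real) + t *\<^sub>R axis b 1 :: real ^ 'c::finite) \<le> \<bar>s\<bar> + \<bar>t\<bar>"
  using norm_triangle_ineq[of "s *\<^sub>R axis a (1::real)" "t *\<^sub>R axis b 1"] by simp

lemma mixed_mvt:
  fixes f :: "real ^ 'c::finite \<Rightarrow> real"
  assumes r: "ball x r \<subseteq> U"
    and df: "\<And>y. y \<in> U \<Longrightarrow> f differentiable at y"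
    and dfa: "\<And>y. y \<in> U \<Longrightarrow> pd a f differentiable at y"
    and h: "0 < h" "2 * h < r"
  shows "\<exists>p. dist p x < 2 * h \<and>
     f (x + h *\<^sub>R axis a 1 + h *\<^sub>R axis b 1) - f (x + h *\<^sub>R axis a 1) - f (x + h *\<^sub>R axis b 1) + f x
       = h * h * pd b (pd a f) p"
proof -
  define u :: "real ^ 'c" where "u = axis a 1"
  define v :: "real ^ 'c" where "v = axis b 1"
  have inU: "x + (s *\<^sub>R u + t *\<^sub>R v) \<in> U" if "0 \<le> s" "s \<le> h" "0 \<le> t" "t \<le> h" for s t
  proof -
    have "norm (s *\<^sub>R u + t *\<^sub>R v) \<le> \<bar>s\<bar> + \<bar>t\<bar>" unfolding u_def v_def by (rule norm_two_axis)
    also have "\<dots> < r" using that h by simp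
    moreover have "dist x (x + (s *\<^sub>R u + t *\<^sub>R v)) = norm (s *\<^sub>R u + t *\<^sub>R v)"
      by (metis add_diff_cancel_left' dist_commute dist_norm)
    ultimately have "x + (s *\<^sub>R u + t *\<^sub>R v) \<in> ball x r" by simp
    then show ?thesis using r by blast
  qed
  define \<phi> where "\<phi> t = f ((x + h *\<^sub>R v) + t *\<^sub>R u) - f (x + t *\<^sub>R u)" for t
  have d\<phi>: "(\<phi> has_real_derivative (pd a f ((x + h *\<^sub>R v) + t *\<^sub>R u) - pd a f (x + t *\<^sub>R u))) (at t)"
    if "0 \<le> t" "t \<le> h" for t
  proof -
    have p1: "(x + h *\<^sub>R v) + t *\<^sub>R u \<in> U" using inU[of t h] that h by (simp add: add_ac)
    have p2: "x + t *\<^sub>R u \<in> U" using inU[of t 0] that h by simp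
    show ?thesis unfolding \<phi>_def[abs_def] u_def
      by (intro DERIV_diff dir_deriv_pd) (use df p1 p2 in \<open>auto simp: u_def\<close>)
  qed
  obtain \<xi> where \<xi>: "0 < \<xi>" "\<xi> < h" "\<phi> h - \<phi> 0 = (h - 0) * (pd a f ((x + h *\<^sub>R v) + \<xi> *\<^sub>R u) - pd a f (x + \<xi> *\<^sub>R u))"
    using MVT2[OF h(1), of \<phi> "\<lambda>t. pd a f ((x + h *\<^sub>R v) + t *\<^sub>R u) - pd a f (x + t *\<^sub>R u)"] d\<phi> by auto
  define \<psi> where "\<psi> s = pd a f ((x + \<xi> *\<^sub>R u) + s *\<^sub>R v)" for s
  have d\<psi>: "(\<psi> has_real_derivative pd b (pd a f) ((x + \<xi> *\<^sub>R u) + s *\<^sub>R v)) (at s)"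
    if "0 \<le> s" "s \<le> h" for s
  proof -
    have "(x + \<xi> *\<^sub>R u) + s *\<^sub>R v \<in> U" using inU[of \<xi> s] that \<xi> by (simp add: add_ac)
    then show ?thesis unfolding \<psi>_def[abs_def] v_def
      by (intro dir_deriv_pd) (use dfa in \<open>auto simp: v_def\<close>)
  qed
  obtain \<eta> where \<eta>: "0 < \<eta>" "\<eta> < h" "\<psi> h - \<psi> 0 = (h - 0) * pd b (pd a f) ((x + \<xi> *\<^sub>R u) + \<eta> *\<^sub>R v)"
    using MVT2[OF h(1), of \<psi> "\<lambda>s. pd b (pd a f) ((x + \<xi> *\<^sub>R u) + s *\<^sub>R v)"] d\<psi> by auto
  define p where "p = (x + \<xi> *\<^sub>R u) + \<eta> *\<^sub>R v"
  have "dist p x = norm (\<xi> *\<^sub>R u + \<eta> *\<^sub>R v)" unfolding p_def by (simp add: dist_norm add_ac)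
  also have "\<dots> \<le> \<bar>\<xi>\<bar> + \<bar>\<eta>\<bar>" unfolding u_def v_def by (rule norm_two_axis)
  also have "\<dots> < 2 * h" using \<xi> \<eta> by simp
  finally have dp: "dist p x < 2 * h" .
  have e1: "\<psi> h - \<psi> 0 = pd a f ((x + h *\<^sub>R v) + \<xi> *\<^sub>R u) - pd a f (x + \<xi> *\<^sub>R u)"
    unfolding \<psi>_def by (simp add: add_ac)
  have "f (x + h *\<^sub>R axis a 1 + h *\<^sub>R axis b 1) - f (x + h *\<^sub>R axis a 1) - f (x + h *\<^sub>R axis b 1) + f x
     = \<phi> h - \<phi> 0"
    unfolding \<phi>_def u_def v_def by (simp add: add_ac)
  also have "\<dots> = h * (\<psi> h - \<psi> 0)" using \<xi>(3) e1 by simp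
  also have "\<dots> = h * h * pd b (pd a f) p" using \<eta>(3) p_def by simp
  finally show ?thesis using dp by blast
qed

lemma schwarz:
  fixes f :: "real ^ 'c::finite \<Rightarrow> real"
  assumes U: "open U" and sm: "smooth_on U f" and x: "x \<in> U"
  shows "pd a (pd b f) x = pd b (pd a f) x"
proof (rule ccontr)
  assume ne: "pd a (pd b f) x \<noteq> pd b (pd a f) x"
  define g1 where "g1 = pd b (pd a f)"
  define g2 where "g2 = pd a (pd b f)"
  obtain r where r: "r > 0" "ball x r \<subseteq> U" using U x open_contains_ball by blast
  have df: "\<And>y. y \<in> U \<Longrightarrow> f differentiable at y" using smooth_diff[OF sm U] by blast
  have dfa: "\<And>y. y \<in> U \<Longrightarrow> pd a f differentiable at y" using smooth_diff[OF smooth_pd[OF sm] U] by blast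
  have dfb: "\<And>y. y \<in> U \<Longrightarrow> pd b f differentiable at y" using smooth_diff[OF smooth_pd[OF sm] U] by blast
  have c1: "isCont g1 x" unfolding g1_def
    using smooth_cont[OF smooth_pd[OF smooth_pd[OF sm]]] U x continuous_on_eq_continuous_at by blast
  have c2: "isCont g2 x" unfolding g2_def
    using smooth_cont[OF smooth_pd[OF smooth_pd[OF sm]]] U x continuous_on_eq_continuous_at by blast
  define e where "e = \<bar>g1 x - g2 x\<bar> / 2"
  have e: "e > 0" using ne unfolding e_def g1_def g2_def by simp
  obtain d1 where d1: "d1 > 0" "\<And>y. dist y x < d1 \<Longrightarrow> dist (g1 y) (g1 x) < e"
    using c1 e unfolding continuous_at_eps_delta by blast
  obtain d2 where d2: "d2 > 0" "\<And>y. dist y x < d2 \<Longrightarrow> dist (g2 y) (g2 x) < e"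
    using c2 e unfolding continuous_at_eps_delta by blast
  define h where "h = min r (min d1 d2) / 4"
  have h: "0 < h" "2 * h < r" "2 * h < d1" "2 * h < d2" using r d1 d2 by (auto simp: h_def)
  obtain p1 where p1: "dist p1 x < 2 * h"
    "f (x + h *\<^sub>R axis a 1 + h *\<^sub>R axis b 1) - f (x + h *\<^sub>R axis a 1) - f (x + h *\<^sub>R axis b 1) + f x
       = h * h * g1 p1"
    using mixed_mvt[OF r(2) df dfa h(1,2)] unfolding g1_def by blast
  obtain p2 where p2: "dist p2 x < 2 * h"
    "f (x + h *\<^sub>R axis b 1 + h *\<^sub>R axis a 1) - f (x + h *\<^sub>R axis b 1) - f (x + h *\<^sub>R axis a 1) + f x
       = h * h * g2 p2"
    using mixed_mvt[OF r(2) df dfb h(1,2)] unfolding g2_def by blast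
  have A: "x + h *\<^sub>R axis b 1 + h *\<^sub>R axis a 1 = x + h *\<^sub>R axis a 1 + h *\<^sub>R axis b (1::real)"
    by (simp add: add_ac)
  have "h * h * g1 p1 = h * h * g2 p2" using p1(2) p2(2)[unfolded A] by linarith
  then have eq: "g1 p1 = g2 p2" using h(1) by simp
  have "dist (g1 p1) (g1 x) < e" using d1(2) p1(1) h by simp
  moreover have "dist (g2 p2) (g2 x) < e" using d2(2) p2(1) h by simp
  ultimately have "\<bar>g1 x - g2 x\<bar> < 2 * e" using eq by (simp add: dist_real_def)
  then show False unfolding e_def by simp
qed


lemma sumJ_swap: "(\<Sum>e\<in>UNIV. X e * (\<Sum>j\<in>J. \<Sum>b\<in>UNIV. \<Sum>s\<in>UNIV. f j b s e)) =
   (\<Sum>j\<in>J. \<Sum>b\<in>UNIV. \<Sum>s\<in>UNIV. \<Sum>e\<in>UNIV. X e * f j b s e)"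
  for X :: "'c::finite \<Rightarrow> real" and f :: "nat \<Rightarrow> 'c \<Rightarrow> 'c \<Rightarrow> 'c \<Rightarrow> real"
proof -
  have "(\<Sum>e\<in>UNIV. X e * (\<Sum>j\<in>J. \<Sum>b\<in>UNIV. \<Sum>s\<in>UNIV. f j b s e)) =
     (\<Sum>e\<in>UNIV. \<Sum>j\<in>J. \<Sum>b\<in>UNIV. \<Sum>s\<in>UNIV. X e * f j b s e)"
    by (simp add: sum_distrib_left)
  also have "\<dots> = (\<Sum>j\<in>J. \<Sum>e\<in>UNIV. \<Sum>b\<in>UNIV. \<Sum>s\<in>UNIV. X e * f j b s e)"
    by (rule sum.swap)
  also have "\<dots> = (\<Sum>j\<in>J. \<Sum>b\<in>UNIV. \<Sum>e\<in>UNIV. \<Sum>s\<in>UNIV. X e * f j b s e)"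
    by (intro sum.cong refl sum.swap)
  also have "\<dots> = (\<Sum>j\<in>J. \<Sum>b\<in>UNIV. \<Sum>s\<in>UNIV. \<Sum>e\<in>UNIV. X e * f j b s e)"
    by (intro sum.cong refl sum.swap)
  finally show ?thesis .
qed

lemma ALG:
  fixes a :: "'c::finite \<Rightarrow> real" and B :: "'c \<Rightarrow> 'c \<Rightarrow> real" and C :: "'c \<Rightarrow> 'c \<Rightarrow> 'c \<Rightarrow> real"
    and X :: "'c \<Rightarrow> real" and D R :: "'c \<Rightarrow> 'c \<Rightarrow> real" and W TT :: "nat \<Rightarrow> 'c \<Rightarrow> 'c \<Rightarrow> real"
    and Tv :: "nat \<Rightarrow> 'c \<Rightarrow> real" and J :: "nat set" and \<delta> :: real
  assumes E1: "\<And>s. (\<Sum>e\<in>UNIV. X e * B s e) = \<delta> * a s - (\<Sum>e\<in>UNIV. D e s * a e)"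
    and E2: "\<And>s b. (\<Sum>e\<in>UNIV. X e * C s b e) = \<delta> * B s b - (\<Sum>e\<in>UNIV. D e s * B e b) - (\<Sum>e\<in>UNIV. D e b * B s e)"
  shows "(\<Sum>e\<in>UNIV. D e c * ((\<Sum>s\<in>UNIV. a s * R s e) + (\<Sum>j\<in>J. \<Sum>b\<in>UNIV. \<Sum>s\<in>UNIV. Tv j b * W j s e * B s b)))
    + (\<Sum>e\<in>UNIV. X e * ((\<Sum>s\<in>UNIV. B s e * R s c) +
         (\<Sum>j\<in>J. \<Sum>b\<in>UNIV. \<Sum>s\<in>UNIV. TT j b e * W j s c * B s b + Tv j b * W j s c * C s b e)))
  = \<delta> * ((\<Sum>s\<in>UNIV. a s * R s c) + (\<Sum>j\<in>J. \<Sum>b\<in>UNIV. \<Sum>s\<in>UNIV. Tv j b * W j s c * B s b))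
    + (\<Sum>s\<in>UNIV. a s * (mm R D s c - mm D R s c))
    + (\<Sum>j\<in>J. \<Sum>b\<in>UNIV. \<Sum>s\<in>UNIV. B s b * (Tv j b * (mm (W j) D s c - mm D (W j) s c)
         + W j s c * ((\<Sum>e\<in>UNIV. TT j b e * X e) - (\<Sum>e\<in>UNIV. D b e * Tv j e))))"
proof -
  have T1a: "(\<Sum>e\<in>UNIV. D e c * (\<Sum>s\<in>UNIV. a s * R s e)) = (\<Sum>s\<in>UNIV. a s * mm R D s c)"
  proof -
    have "(\<Sum>e\<in>UNIV. D e c * (\<Sum>s\<in>UNIV. a s * R s e)) = (\<Sum>e\<in>UNIV. \<Sum>s\<in>UNIV. a s * (R s e * D e c))"
      by (simp add: sum_distrib_left mult_ac)
    also have "\<dots> = (\<Sum>s\<in>UNIV. \<Sum>e\<in>UNIV. a s * (R s e * D e c))" by (rule sum.swap)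
    also have "\<dots> = (\<Sum>s\<in>UNIV. a s * mm R D s c)" unfolding mm_def by (simp add: sum_distrib_left)
    finally show ?thesis .
  qed
  have T1b: "(\<Sum>e\<in>UNIV. D e c * (\<Sum>j\<in>J. \<Sum>b\<in>UNIV. \<Sum>s\<in>UNIV. Tv j b * W j s e * B s b)) =
      (\<Sum>j\<in>J. \<Sum>b\<in>UNIV. \<Sum>s\<in>UNIV. Tv j b * mm (W j) D s c * B s b)"
    unfolding sumJ_swap mm_def by (intro sum.cong refl) (simp add: sum_distrib_left sum_distrib_right mult_ac)
  have T2: "(\<Sum>e\<in>UNIV. X e * (\<Sum>s\<in>UNIV. B s e * R s c)) =
      \<delta> * (\<Sum>s\<in>UNIV. a s * R s c) - (\<Sum>s\<in>UNIV. a s * mm D R s c)"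
  proof -
    have "(\<Sum>e\<in>UNIV. X e * (\<Sum>s\<in>UNIV. B s e * R s c)) = (\<Sum>e\<in>UNIV. \<Sum>s\<in>UNIV. R s c * (X e * B s e))"
      by (simp add: sum_distrib_left mult_ac)
    also have "\<dots> = (\<Sum>s\<in>UNIV. \<Sum>e\<in>UNIV. R s c * (X e * B s e))" by (rule sum.swap)
    also have "\<dots> = (\<Sum>s\<in>UNIV. R s c * (\<Sum>e\<in>UNIV. X e * B s e))"
      by (simp add: sum_distrib_left)
    also have "\<dots> = (\<Sum>s\<in>UNIV. R s c * (\<delta> * a s - (\<Sum>e\<in>UNIV. D e s * a e)))"
      by (simp add: E1)
    also have "\<dots> = \<delta> * (\<Sum>s\<in>UNIV. a s * R s c) - (\<Sum>s\<in>UNIV. \<Sum>e\<in>UNIV. a e * (D e s * R s c))"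
      by (simp add: right_diff_distrib sum_subtractf sum_distrib_left mult_ac)
    also have "(\<Sum>s\<in>UNIV. \<Sum>e\<in>UNIV. a e * (D e s * R s c)) = (\<Sum>e\<in>UNIV. \<Sum>s\<in>UNIV. a e * (D e s * R s c))"
      by (rule sum.swap)
    also have "\<dots> = (\<Sum>e\<in>UNIV. a e * mm D R e c)"
      unfolding mm_def by (simp add: sum_distrib_left)
    finally show ?thesis .
  qed
  have T34: "(\<Sum>e\<in>UNIV. X e * (\<Sum>j\<in>J. \<Sum>b\<in>UNIV. \<Sum>s\<in>UNIV. TT j b e * W j s c * B s b + Tv j b * W j s c * C s b e))
     = (\<Sum>j\<in>J. \<Sum>b\<in>UNIV. \<Sum>s\<in>UNIV. (\<Sum>e\<in>UNIV. TT j b e * X e) * W j s c * B s b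
          + \<delta> * (Tv j b * W j s c * B s b) - Tv j b * mm D (W j) s c * B s b
          - B s b * W j s c * (\<Sum>e\<in>UNIV. D b e * Tv j e))"
  proof -
    have "(\<Sum>e\<in>UNIV. X e * (\<Sum>j\<in>J. \<Sum>b\<in>UNIV. \<Sum>s\<in>UNIV. TT j b e * W j s c * B s b + Tv j b * W j s c * C s b e))
      = (\<Sum>j\<in>J. \<Sum>b\<in>UNIV. \<Sum>s\<in>UNIV. \<Sum>e\<in>UNIV. X e * (TT j b e * W j s c * B s b + Tv j b * W j s c * C s b e))"
      by (rule sumJ_swap)
    also have "\<dots> = (\<Sum>j\<in>J. \<Sum>b\<in>UNIV. \<Sum>s\<in>UNIV. (\<Sum>e\<in>UNIV. TT j b e * X e) * W j s c * B s b
          + Tv j b * W j s c * (\<Sum>e\<in>UNIV. X e * C s b e))"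
      by (intro sum.cong refl) (simp add: sum.distrib sum_distrib_left sum_distrib_right mult_ac ring_distribs)
    also have "\<dots> = (\<Sum>j\<in>J. \<Sum>b\<in>UNIV. \<Sum>s\<in>UNIV. ((\<Sum>e\<in>UNIV. TT j b e * X e) * W j s c * B s b
          + \<delta> * (Tv j b * W j s c * B s b)) - Tv j b * W j s c * (\<Sum>e\<in>UNIV. D e s * B e b)
          - Tv j b * W j s c * (\<Sum>e\<in>UNIV. D e b * B s e))"
      by (intro sum.cong refl) (simp add: E2 algebra_simps)
    also have "\<dots> = (\<Sum>j\<in>J. (\<Sum>b\<in>UNIV. \<Sum>s\<in>UNIV. (\<Sum>e\<in>UNIV. TT j b e * X e) * W j s c * B s b
          + \<delta> * (Tv j b * W j s c * B s b))
          - (\<Sum>b\<in>UNIV. \<Sum>s\<in>UNIV. Tv j b * W j s c * (\<Sum>e\<in>UNIV. D e s * B e b))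
          - (\<Sum>b\<in>UNIV. \<Sum>s\<in>UNIV. Tv j b * W j s c * (\<Sum>e\<in>UNIV. D e b * B s e)))"
      by (simp only: sum_subtractf)
    also have "\<dots> = (\<Sum>j\<in>J. (\<Sum>b\<in>UNIV. \<Sum>s\<in>UNIV. (\<Sum>e\<in>UNIV. TT j b e * X e) * W j s c * B s b
          + \<delta> * (Tv j b * W j s c * B s b))
          - (\<Sum>b\<in>UNIV. \<Sum>s\<in>UNIV. Tv j b * mm D (W j) s c * B s b)
          - (\<Sum>b\<in>UNIV. \<Sum>s\<in>UNIV. B s b * W j s c * (\<Sum>e\<in>UNIV. D b e * Tv j e)))"
    proof (rule sum.cong[OF refl], goal_cases)
      case (1 j)
      have "(\<Sum>b\<in>UNIV. \<Sum>s\<in>UNIV. Tv j b * W j s c * (\<Sum>e\<in>UNIV. D e s * B e b)) =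
            (\<Sum>b\<in>UNIV. \<Sum>s\<in>UNIV. \<Sum>e\<in>UNIV. Tv j b * W j s c * D e s * B e b)"
        by (simp add: sum_distrib_left mult_ac)
      also have "\<dots> = (\<Sum>b\<in>UNIV. \<Sum>e\<in>UNIV. \<Sum>s\<in>UNIV. Tv j b * W j s c * D e s * B e b)"
        by (intro sum.cong refl sum.swap)
      also have "\<dots> = (\<Sum>b\<in>UNIV. \<Sum>s\<in>UNIV. Tv j b * mm D (W j) s c * B s b)"
        unfolding mm_def by (simp add: sum_distrib_left sum_distrib_right mult_ac)
      finally have eq1: "(\<Sum>b\<in>UNIV. \<Sum>s\<in>UNIV. Tv j b * W j s c * (\<Sum>e\<in>UNIV. D e s * B e b)) =
            (\<Sum>b\<in>UNIV. \<Sum>s\<in>UNIV. Tv j b * mm D (W j) s c * B s b)" .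
      have "(\<Sum>b\<in>UNIV. \<Sum>s\<in>UNIV. Tv j b * W j s c * (\<Sum>e\<in>UNIV. D e b * B s e)) =
            (\<Sum>b\<in>UNIV. \<Sum>s\<in>UNIV. \<Sum>e\<in>UNIV. Tv j b * W j s c * D e b * B s e)"
        by (simp add: sum_distrib_left mult_ac)
      also have "\<dots> = (\<Sum>s\<in>UNIV. \<Sum>b\<in>UNIV. \<Sum>e\<in>UNIV. Tv j b * W j s c * D e b * B s e)"
        by (rule sum.swap)
      also have "\<dots> = (\<Sum>s\<in>UNIV. \<Sum>e\<in>UNIV. \<Sum>b\<in>UNIV. Tv j b * W j s c * D e b * B s e)"
        by (intro sum.cong refl sum.swap)
      also have "\<dots> = (\<Sum>b\<in>UNIV. \<Sum>s\<in>UNIV. \<Sum>e\<in>UNIV. Tv j e * W j s c * D b e * B s b)"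
        by (rule sum.swap)
      also have "\<dots> = (\<Sum>b\<in>UNIV. \<Sum>s\<in>UNIV. B s b * W j s c * (\<Sum>e\<in>UNIV. D b e * Tv j e))"
        by (simp add: sum_distrib_left mult_ac)
      finally have eq2: "(\<Sum>b\<in>UNIV. \<Sum>s\<in>UNIV. Tv j b * W j s c * (\<Sum>e\<in>UNIV. D e b * B s e)) =
            (\<Sum>b\<in>UNIV. \<Sum>s\<in>UNIV. B s b * W j s c * (\<Sum>e\<in>UNIV. D b e * Tv j e))" .
      show ?case by (simp only: eq1 eq2)
    qed
    also have "\<dots> = (\<Sum>j\<in>J. \<Sum>b\<in>UNIV. \<Sum>s\<in>UNIV. (\<Sum>e\<in>UNIV. TT j b e * X e) * W j s c * B s b
          + \<delta> * (Tv j b * W j s c * B s b) - Tv j b * mm D (W j) s c * B s b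
          - B s b * W j s c * (\<Sum>e\<in>UNIV. D b e * Tv j e))"
      by (simp only: sum_subtractf)
    finally show ?thesis .
  qed
  have split: "(\<Sum>e\<in>UNIV. D e c * ((\<Sum>s\<in>UNIV. a s * R s e) + (\<Sum>j\<in>J. \<Sum>b\<in>UNIV. \<Sum>s\<in>UNIV. Tv j b * W j s e * B s b)))
    + (\<Sum>e\<in>UNIV. X e * ((\<Sum>s\<in>UNIV. B s e * R s c) +
         (\<Sum>j\<in>J. \<Sum>b\<in>UNIV. \<Sum>s\<in>UNIV. TT j b e * W j s c * B s b + Tv j b * W j s c * C s b e)))
    = (\<Sum>e\<in>UNIV. D e c * (\<Sum>s\<in>UNIV. a s * R s e)) + (\<Sum>e\<in>UNIV. D e c * (\<Sum>j\<in>J. \<Sum>b\<in>UNIV. \<Sum>s\<in>UNIV. Tv j b * W j s e * B s b))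
      + (\<Sum>e\<in>UNIV. X e * (\<Sum>s\<in>UNIV. B s e * R s c))
      + (\<Sum>e\<in>UNIV. X e * (\<Sum>j\<in>J. \<Sum>b\<in>UNIV. \<Sum>s\<in>UNIV. TT j b e * W j s c * B s b + Tv j b * W j s c * C s b e))"
    by (simp only: distrib_left sum.distrib add.assoc)
  have fin: "\<delta> * ((\<Sum>s\<in>UNIV. a s * R s c) + (\<Sum>j\<in>J. \<Sum>b\<in>UNIV. \<Sum>s\<in>UNIV. Tv j b * W j s c * B s b))
    + (\<Sum>s\<in>UNIV. a s * (mm R D s c - mm D R s c))
    + (\<Sum>j\<in>J. \<Sum>b\<in>UNIV. \<Sum>s\<in>UNIV. B s b * (Tv j b * (mm (W j) D s c - mm D (W j) s c)
         + W j s c * ((\<Sum>e\<in>UNIV. TT j b e * X e) - (\<Sum>e\<in>UNIV. D b e * Tv j e))))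
   = (\<Sum>s\<in>UNIV. a s * mm R D s c) + (\<delta> * (\<Sum>s\<in>UNIV. a s * R s c) - (\<Sum>s\<in>UNIV. a s * mm D R s c))
     + (\<Sum>j\<in>J. \<Sum>b\<in>UNIV. \<Sum>s\<in>UNIV. Tv j b * mm (W j) D s c * B s b
          + ((\<Sum>e\<in>UNIV. TT j b e * X e) * W j s c * B s b
          + \<delta> * (Tv j b * W j s c * B s b) - Tv j b * mm D (W j) s c * B s b
          - B s b * W j s c * (\<Sum>e\<in>UNIV. D b e * Tv j e)))"
  proof -
    have "(\<Sum>s\<in>UNIV. a s * (mm R D s c - mm D R s c)) = (\<Sum>s\<in>UNIV. a s * mm R D s c) - (\<Sum>s\<in>UNIV. a s * mm D R s c)"
      by (simp add: right_diff_distrib sum_subtractf)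
    moreover have "\<delta> * (\<Sum>j\<in>J. \<Sum>b\<in>UNIV. \<Sum>s\<in>UNIV. Tv j b * W j s c * B s b)
       + (\<Sum>j\<in>J. \<Sum>b\<in>UNIV. \<Sum>s\<in>UNIV. B s b * (Tv j b * (mm (W j) D s c - mm D (W j) s c)
         + W j s c * ((\<Sum>e\<in>UNIV. TT j b e * X e) - (\<Sum>e\<in>UNIV. D b e * Tv j e))))
       = (\<Sum>j\<in>J. \<Sum>b\<in>UNIV. \<Sum>s\<in>UNIV. Tv j b * mm (W j) D s c * B s b
          + ((\<Sum>e\<in>UNIV. TT j b e * X e) * W j s c * B s b
          + \<delta> * (Tv j b * W j s c * B s b) - Tv j b * mm D (W j) s c * B s b
          - B s b * W j s c * (\<Sum>e\<in>UNIV. D b e * Tv j e)))"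
      by (simp only: sum_distrib_left sum.distrib[symmetric]) (intro sum.cong refl; simp add: algebra_simps sum_distrib_left)
    ultimately show ?thesis by (simp add: algebra_simps)
  qed
  have comb: "(\<Sum>j\<in>J. \<Sum>b\<in>UNIV. \<Sum>s\<in>UNIV. Tv j b * mm (W j) D s c * B s b) +
     (\<Sum>j\<in>J. \<Sum>b\<in>UNIV. \<Sum>s\<in>UNIV. (\<Sum>e\<in>UNIV. TT j b e * X e) * W j s c * B s b
          + \<delta> * (Tv j b * W j s c * B s b) - Tv j b * mm D (W j) s c * B s b
          - B s b * W j s c * (\<Sum>e\<in>UNIV. D b e * Tv j e))
    = (\<Sum>j\<in>J. \<Sum>b\<in>UNIV. \<Sum>s\<in>UNIV. Tv j b * mm (W j) D s c * B s b
          + ((\<Sum>e\<in>UNIV. TT j b e * X e) * W j s c * B s b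
          + \<delta> * (Tv j b * W j s c * B s b) - Tv j b * mm D (W j) s c * B s b
          - B s b * W j s c * (\<Sum>e\<in>UNIV. D b e * Tv j e)))"
    by (simp only: sum.distrib[symmetric])
  show ?thesis
    unfolding split T1a T1b T2 T34 fin comb[symmetric] by simp
qed


lemma lie_fun_lin: "lie_fun (lin A) f y = (\<Sum>b\<in>UNIV. lin A y b * pd b f y)"
  unfolding lie_fun_def ivf_def dfun_def by simp

lemma pd_cong_gen: "open U \<Longrightarrow> x \<in> U \<Longrightarrow> (\<And>y. y \<in> U \<Longrightarrow> f y = g y) \<Longrightarrow> pd c f x = pd c g x"
proof -
  assume U: "open U" and x: "x \<in> U" and fg: "\<And>y. y \<in> U \<Longrightarrow> f y = g y"
  have "(\<lambda>f'. (f has_derivative f') (at x)) = (\<lambda>f'. (g has_derivative f') (at x))"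
  proof (intro ext iffI)
    fix f' assume "(f has_derivative f') (at x)"
    then show "(g has_derivative f') (at x)" using has_derivative_transform_within_open[OF _ U x] fg by blast
  next
    fix f' assume "(g has_derivative f') (at x)"
    then show "(f has_derivative f') (at x)" using has_derivative_transform_within_open[OF _ U x] fg by metis
  qed
  then show ?thesis unfolding pd_def frechet_derivative_def by simp
qed

lemma lie_form_cong:
  assumes "open U" "x \<in> U" "\<And>y b. y \<in> U \<Longrightarrow> \<omega> y b = \<omega>' y b"
  shows "lie_form X \<omega> x c = lie_form X \<omega>' x c"
proof -
  have "ivf X \<omega> y = ivf X \<omega>' y" if "y \<in> U" for y unfolding ivf_def using assms(3)[OF that] by simp
  then have 1: "dfun (ivf X \<omega>) x c = dfun (ivf X \<omega>') x c"
    unfolding dfun_def by (rule pd_cong_gen[OF assms(1,2)])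
  have "dform \<omega> x b c = dform \<omega>' x b c" for b
    unfolding dform_def using pd_cong_gen[OF assms(1,2), of "\<lambda>y. \<omega> y c" "\<lambda>y. \<omega>' y c"]
      pd_cong_gen[OF assms(1,2), of "\<lambda>y. \<omega> y b" "\<lambda>y. \<omega>' y b"] assms(3) by simp
  then have 2: "iform2 X (dform \<omega>) x c = iform2 X (dform \<omega>') x c" unfolding iform2_def by simp
  show ?thesis unfolding lie_form_def 1 2 ..
qed

lemma lie_form_lin:
  fixes \<omega> :: "'c::finite form1"
  assumes d: "\<And>b. (\<lambda>y. \<omega> y b) differentiable at x"
  shows "lie_form (lin A) \<omega> x c = (\<Sum>b\<in>UNIV. A b c * \<omega> x b) + (\<Sum>b\<in>UNIV. lin A x b * pd b (\<lambda>y. \<omega> y c) x)"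
proof -
  have "dfun (ivf (lin A) \<omega>) x c = pd c (\<lambda>y. \<Sum>b\<in>UNIV. lin A y b * \<omega> y b) x"
    unfolding dfun_def ivf_def[abs_def] ..
  also have "\<dots> = (\<Sum>b\<in>UNIV. pd c (\<lambda>y. lin A y b * \<omega> y b) x)"
    by (rule pd_sum) (use d in auto)
  also have "\<dots> = (\<Sum>b\<in>UNIV. A b c * \<omega> x b + lin A x b * pd c (\<lambda>y. \<omega> y b) x)"
    by (intro sum.cong refl) (simp add: pd_mult d pd_lin)
  finally have 1: "dfun (ivf (lin A) \<omega>) x c = \<dots>" .
  have 2: "iform2 (lin A) (dform \<omega>) x c = (\<Sum>b\<in>UNIV. lin A x b * (pd b (\<lambda>y. \<omega> y c) x - pd c (\<lambda>y. \<omega> y b) x))"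
    unfolding iform2_def dform_def ..
  show ?thesis unfolding lie_form_def 1 2
    by (simp add: sum.distrib[symmetric] algebra_simps)
qed

lemma vanish:
  fixes L :: "'a::finite pt \<Rightarrow> real"
  assumes sol: "second_order_lagrangian U L" and y: "y \<in> U" and b: "\<not> mi_ord (snd b) \<le> 2"
  shows "pd b L y = 0"
proof -
  have U: "open U" and sm: "smooth_on U L" using sol unfolding second_order_lagrangian_def by auto
  have inv: "\<forall>x\<in>U. \<forall>z. (\<forall>\<alpha> m. mi_ord m \<le> 2 \<longrightarrow> z $ (\<alpha>, m) = x $ (\<alpha>, m)) \<longrightarrow> z \<in> U \<and> L z = L x"
    using sol unfolding second_order_lagrangian_def by blast
  have const: "L (y + t *\<^sub>R axis b 1) = L y" for t
  proof -
    have "(y + t *\<^sub>R axis b 1) $ (\<alpha>, m) = y $ (\<alpha>, m)" if "mi_ord m \<le> 2" for \<alpha> m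
    proof -
      have "(\<alpha>, m) \<noteq> b" using that b by auto
      then show ?thesis by (simp add: axis_def)
    qed
    then show ?thesis using inv y by blast
  qed
  have "((\<lambda>t. L (y + t *\<^sub>R axis b 1)) has_real_derivative pd b L (y + 0 *\<^sub>R axis b 1)) (at 0)"
    by (rule dir_deriv_pd) (use smooth_diff[OF sm U y] in simp)
  then have "((\<lambda>t. L y) has_real_derivative pd b L y) (at 0)" using const by simp
  then show ?thesis using DERIV_const DERIV_unique by blast
qed

lemma E1:
  fixes L :: "real ^ 'c::finite \<Rightarrow> real"
  assumes U: "open U" and sm: "smooth_on U L"
    and H: "\<And>z. z \<in> U \<Longrightarrow> (\<Sum>b\<in>UNIV. lin D z b * pd b L z) = \<delta> * L z" and y: "y \<in> U"
  shows "(\<Sum>e\<in>UNIV. lin D y e * pd e (pd s L) y) = \<delta> * pd s L y - (\<Sum>e\<in>UNIV. D e s * pd e L y)"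
proof -
  have dL: "L differentiable at y" using smooth_diff[OF sm U y] .
  have dL1: "\<And>b. pd b L differentiable at y" using smooth_diff[OF smooth_pd[OF sm] U y] .
  have "pd s (\<lambda>z. (\<Sum>b\<in>UNIV. lin D z b * pd b L z) - \<delta> * L z) y = 0"
    by (rule pd_zero_on[OF U y]) (use H in simp)
  moreover have "pd s (\<lambda>z. (\<Sum>b\<in>UNIV. lin D z b * pd b L z) - \<delta> * L z) y =
     (\<Sum>b\<in>UNIV. D b s * pd b L y + lin D y b * pd s (pd b L) y) - \<delta> * pd s L y"
    using dL dL1 by (simp add: pd_diff pd_sum pd_mult pd_lin pd_cmult pd_const)
  moreover have "pd s (pd b L) y = pd b (pd s L) y" for b using schwarz[OF U sm y] .
  ultimately show ?thesis by (simp add: sum.distrib algebra_simps)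
qed

lemma E2:
  fixes L :: "real ^ 'c::finite \<Rightarrow> real"
  assumes U: "open U" and sm: "smooth_on U L"
    and H: "\<And>z. z \<in> U \<Longrightarrow> (\<Sum>b\<in>UNIV. lin D z b * pd b L z) = \<delta> * L z" and x: "x \<in> U"
  shows "(\<Sum>e\<in>UNIV. lin D x e * pd e (pd b (pd s L)) x) =
     \<delta> * pd b (pd s L) x - (\<Sum>e\<in>UNIV. D e s * pd b (pd e L) x) - (\<Sum>e\<in>UNIV. D e b * pd e (pd s L) x)"
proof -
  have dL1: "\<And>b. pd b L differentiable at x" using smooth_diff[OF smooth_pd[OF sm] U x] .
  have dL2: "\<And>b e. pd e (pd b L) differentiable at x"
    using smooth_diff[OF smooth_pd[OF smooth_pd[OF sm]] U x] .
  have "pd b (\<lambda>z. (\<Sum>e\<in>UNIV. lin D z e * pd e (pd s L) z) - \<delta> * pd s L z + (\<Sum>e\<in>UNIV. D e s * pd e L z)) x = 0"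
    by (rule pd_zero_on[OF U x]) (use E1[OF U sm H] in simp)
  moreover have "pd b (\<lambda>z. (\<Sum>e\<in>UNIV. lin D z e * pd e (pd s L) z) - \<delta> * pd s L z + (\<Sum>e\<in>UNIV. D e s * pd e L z)) x =
     (\<Sum>e\<in>UNIV. D e b * pd e (pd s L) x + lin D x e * pd b (pd e (pd s L)) x) - \<delta> * pd b (pd s L) x
       + (\<Sum>e\<in>UNIV. D e s * pd b (pd e L) x)"
    using dL1 dL2 by (simp add: pd_add pd_diff pd_sum pd_mult pd_lin pd_cmult pd_const)
  moreover have "pd b (pd e (pd s L)) x = pd e (pd b (pd s L)) x" for e
    using schwarz[OF U smooth_pd[OF sm] x] .
  ultimately show ?thesis by (simp add: sum.distrib algebra_simps)
qed


lemma dg_cong: "(\<And>p q. p \<in> Pset \<Longrightarrow> q \<in> Pset \<Longrightarrow> a p q = b p q) \<Longrightarrow> dg a = dg b"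
  unfolding dg_def by (intro ext) (simp add: rep_in)

lemma Smat_dg: "k \<in> {1,2} \<Longrightarrow> j \<in> {1,2} \<Longrightarrow> (Smat k j :: ('a::finite \<times> mi) \<Rightarrow> _) = dg (sm k j)"
proof -
  assume a: "k \<in> {1,2}" "j \<in> {1,2}"
  have "(Smat k j :: ('a::finite \<times> mi) \<Rightarrow> _) = dg (smraw k j)" by (rule Smat_raw) (use a in auto)
  also have "\<dots> = dg (sm k j)" by (rule dg_cong) (use sm_raw a in auto)
  finally show ?thesis .
qed

lemma TMat_dg: "k \<in> {1,2} \<Longrightarrow> j \<in> {1,2} \<Longrightarrow> (TMat k j :: ('a::finite \<times> mi) \<Rightarrow> _) = dg (tm k j)"
proof -
  assume a: "k \<in> {1,2}" "j \<in> {1,2}"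
  have "(TMat k j :: ('a::finite \<times> mi) \<Rightarrow> _) = dg (tmraw k j)" by (rule TMat_raw) (use a in auto)
  also have "\<dots> = dg (tm k j)" by (rule dg_cong) (use tm_raw a in auto)
  finally show ?thesis .
qed

definition PP :: "nat \<Rightarrow> ('a::finite \<times> mi) \<Rightarrow> ('a \<times> mi) \<Rightarrow> real" where "PP j = Smat 1 j"
definition TT :: "nat \<Rightarrow> ('a::finite \<times> mi) \<Rightarrow> ('a \<times> mi) \<Rightarrow> real" where "TT j = TMat 2 j"
definition DD :: "nat \<Rightarrow> nat \<Rightarrow> ('a::finite \<times> mi) \<Rightarrow> ('a \<times> mi) \<Rightarrow> real" where "DD i l = mm (Smat 2 i) (TMat 2 l)"
definition QQ :: "nat \<Rightarrow> nat \<Rightarrow> ('a::finite \<times> mi) \<Rightarrow> ('a \<times> mi) \<Rightarrow> real" where "QQ m j = mm (PP m) (PP j)"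
definition RR :: "nat \<Rightarrow> ('a::finite \<times> mi) \<Rightarrow> ('a \<times> mi) \<Rightarrow> real" where
  "RR m s c = PP m s c - 1/2 * (\<Sum>j\<in>{1,2}. mm (QQ m j) (TT j) s c)"
definition WW :: "nat \<Rightarrow> nat \<Rightarrow> ('a::finite \<times> mi) \<Rightarrow> ('a \<times> mi) \<Rightarrow> real" where
  "WW m j s c = - 1/2 * QQ m j s c"

lemma DD_dg: "i \<in> {1,2} \<Longrightarrow> l \<in> {1,2} \<Longrightarrow> (DD i l :: ('a::finite \<times> mi) \<Rightarrow> _) = dg (ddc i l)"
proof -
  assume a: "i \<in> {1,2}" "l \<in> {1,2}"
  have "(DD i l :: ('a::finite \<times> mi) \<Rightarrow> _) = dg (pm (sm 2 i) (tm 2 l))"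
    unfolding DD_def using a by (simp add: Smat_dg TMat_dg mm_dg)
  also have "\<dots> = dg (ddc i l)"
  proof (rule dg_cong)
    fix p q assume "p \<in> Pset" "q \<in> Pset"
    from dd_all[OF this] a show "pm (sm 2 i) (tm 2 l) p q = ddc i l p q" by blast
  qed
  finally show ?thesis .
qed

lemma QQ_dg: "m \<in> {1,2} \<Longrightarrow> j \<in> {1,2} \<Longrightarrow> (QQ m j :: ('a::finite \<times> mi) \<Rightarrow> _) = dg (q2c m j)"
proof -
  assume a: "m \<in> {1,2}" "j \<in> {1,2}"
  have "(QQ m j :: ('a::finite \<times> mi) \<Rightarrow> _) = dg (pm (sm 1 m) (sm 1 j))"
    unfolding QQ_def PP_def using a by (simp add: Smat_dg mm_dg)
  also have "\<dots> = dg (q2c m j)"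
  proof (rule dg_cong)
    fix p q assume "p \<in> Pset" "q \<in> Pset"
    from q2_all[OF this] a show "pm (sm 1 m) (sm 1 j) p q = q2c m j p q" by blast
  qed
  finally show ?thesis .
qed

lemma QT_dg: "m \<in> {1,2} \<Longrightarrow> j \<in> {1,2} \<Longrightarrow> (mm (QQ m j) (TT j) :: ('a::finite \<times> mi) \<Rightarrow> _) = dg (qtc m j)"
proof -
  assume a: "m \<in> {1,2}" "j \<in> {1,2}"
  have "(mm (QQ m j) (TT j) :: ('a::finite \<times> mi) \<Rightarrow> _) = dg (pm (q2c m j) (tm 2 j))"
    unfolding TT_def using a by (simp add: QQ_dg TMat_dg mm_dg)
  also have "\<dots> = dg (qtc m j)"
  proof (rule dg_cong)
    fix p q assume "p \<in> Pset" "q \<in> Pset"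
    from q2_all[OF this] a show "pm (q2c m j) (tm 2 j) p q = qtc m j p q" by blast
  qed
  finally show ?thesis .
qed

lemma RR_dg: "m \<in> {1,2} \<Longrightarrow> (RR m :: ('a::finite \<times> mi) \<Rightarrow> _) = dg (rrc m)"
proof (intro ext)
  fix s c :: "'a \<times> mi"
  assume m: "m \<in> {1,2}"
  have "RR m s c = PP m s c - 1/2 * (mm (QQ m 1) (TT 1) s c + mm (QQ m 2) (TT 2) s c)"
    unfolding RR_def by simp
  also have "\<dots> = dg (sm 1 m) s c - 1/2 * (dg (qtc m 1) s c + dg (qtc m 2) s c)"
    using m by (simp add: QT_dg PP_def Smat_dg)
  also have "\<dots> = dg (rrc m) s c"
    unfolding dg_def rrc_def by simp
  finally show "RR m s c = dg (rrc m) s c" .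
qed

lemma dg_comm:
  fixes s c :: "'a::finite \<times> mi"
  assumes "\<And>p q. p \<in> Pset \<Longrightarrow> q \<in> Pset \<Longrightarrow> pm a b p q - pm b a p q = r p q"
  shows "mm (dg a) (dg b) s c - mm (dg b) (dg a) s c = (dg r s c :: real)"
  unfolding mm_dg dg_def using assms[OF rep_in rep_in] by simp

lemma MI1: "i \<in> {1,2} \<Longrightarrow> l \<in> {1,2} \<Longrightarrow> m \<in> {1,2} \<Longrightarrow>
  mm (RR m) (DD i l) s c - mm (DD i l) (RR m) s c = - (if m = l then RR i s c else 0)"
  for s c :: "'a::finite \<times> mi"
proof -
  assume a: "i \<in> {1,2}" "l \<in> {1,2}" "m \<in> {1,2}"
  have "mm (RR m) (DD i l) s c - mm (DD i l) (RR m) s c = mm (dg (rrc m)) (dg (ddc i l)) s c - mm (dg (ddc i l)) (dg (rrc m)) s c"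
    using a by (simp add: RR_dg DD_dg)
  also have "\<dots> = dg (\<lambda>p q. - (if m = l then rrc i p q else 0)) s c"
    by (rule dg_comm) (use PL1_all a in blast)
  also have "\<dots> = - (if m = l then RR i s c else 0)"
    using a by (simp add: RR_dg dg_def)
  finally show ?thesis .
qed

lemma MIQ: "i \<in> {1,2} \<Longrightarrow> l \<in> {1,2} \<Longrightarrow> m \<in> {1,2} \<Longrightarrow> j \<in> {1,2} \<Longrightarrow>
  mm (QQ m j) (DD i l) s c - mm (DD i l) (QQ m j) s c =
     - ((if j = l then QQ m i s c else 0) + (if m = l then QQ i j s c else 0))"
  for s c :: "'a::finite \<times> mi"
proof -
  assume a: "i \<in> {1,2}" "l \<in> {1,2}" "m \<in> {1,2}" "j \<in> {1,2}"
  have "mm (QQ m j) (DD i l) s c - mm (DD i l) (QQ m j) s c = mm (dg (q2c m j)) (dg (ddc i l)) s c - mm (dg (ddc i l)) (dg (q2c m j)) s c"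
    using a by (simp add: QQ_dg DD_dg)
  also have "\<dots> = dg (\<lambda>p q. - ((if j = l then q2c m i p q else 0) + (if m = l then q2c i j p q else 0))) s c"
    by (rule dg_comm) (use PL2_all a in blast)
  also have "\<dots> = - ((if j = l then QQ m i s c else 0) + (if m = l then QQ i j s c else 0))"
    using a by (simp add: QQ_dg dg_def)
  finally show ?thesis .
qed

lemma MIT0: "i \<in> {1,2} \<Longrightarrow> l \<in> {1,2} \<Longrightarrow> j \<in> {1,2} \<Longrightarrow>
  mm (TT j) (DD i l) s c - mm (DD i l) (TT j) s c = (if i = j then TT l s c else 0)"
  for s c :: "'a::finite \<times> mi"
proof -
  assume a: "i \<in> {1,2}" "l \<in> {1,2}" "j \<in> {1,2}"
  have "mm (TT j) (DD i l) s c - mm (DD i l) (TT j) s c = mm (dg (tm 2 j)) (dg (ddc i l)) s c - mm (dg (ddc i l)) (dg (tm 2 j)) s c"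
    using a by (simp add: TT_def TMat_dg DD_dg)
  also have "\<dots> = dg (\<lambda>p q. (if i = j then tm 2 l p q else 0)) s c"
    by (rule dg_comm) (use PL3_all a in blast)
  also have "\<dots> = (if i = j then TT l s c else 0)"
    using a by (simp add: TT_def TMat_dg dg_def)
  finally show ?thesis .
qed

lemma MIW: "i \<in> {1,2} \<Longrightarrow> l \<in> {1,2} \<Longrightarrow> m \<in> {1,2} \<Longrightarrow> j \<in> {1,2} \<Longrightarrow>
  mm (WW m j) (DD i l) s c - mm (DD i l) (WW m j) s c =
     1/2 * ((if j = l then QQ m i s c else 0) + (if m = l then QQ i j s c else 0))"
  for s c :: "'a::finite \<times> mi"
proof -
  assume a: "i \<in> {1,2}" "l \<in> {1,2}" "m \<in> {1,2}" "j \<in> {1,2}"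
  have "mm (WW m j) (DD i l) s c = - 1/2 * mm (QQ m j) (DD i l) s c"
    unfolding mm_def WW_def by (simp add: sum_distrib_left mult_ac)
  moreover have "mm (DD i l) (WW m j) s c = - 1/2 * mm (DD i l) (QQ m j) s c"
    unfolding mm_def WW_def by (simp add: sum_distrib_left mult_ac)
  ultimately show ?thesis using MIQ[OF a, of s c] by (simp add: algebra_simps)
qed

lemma lin_mm: "(\<Sum>e\<in>UNIV. A b e * lin B x e) = lin (mm A B) x b"
proof -
  have "(\<Sum>e\<in>UNIV. A b e * lin B x e) = (\<Sum>e\<in>UNIV. \<Sum>d\<in>UNIV. A b e * B e d * x $ d)"
    unfolding lin_def by (simp add: sum_distrib_left mult_ac)
  also have "\<dots> = (\<Sum>d\<in>UNIV. \<Sum>e\<in>UNIV. A b e * B e d * x $ d)" by (rule sum.swap)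
  also have "\<dots> = lin (mm A B) x b" unfolding lin_def mm_def by (simp add: sum_distrib_right)
  finally show ?thesis .
qed

lemma MIT: "i \<in> {1,2} \<Longrightarrow> l \<in> {1,2} \<Longrightarrow> j \<in> {1,2} \<Longrightarrow>
  (\<Sum>e\<in>UNIV. TT j b e * lin (DD i l) x e) - (\<Sum>e\<in>UNIV. DD i l b e * lin (TT j) x e) =
    (if i = j then lin (TT l) x b else 0)"
  for b :: "'a::finite \<times> mi"
proof -
  assume a: "i \<in> {1,2}" "l \<in> {1,2}" "j \<in> {1,2}"
  have "lin (mm (TT j) (DD i l)) x b - lin (mm (DD i l) (TT j)) x b =
     (\<Sum>d\<in>UNIV. (mm (TT j) (DD i l) b d - mm (DD i l) (TT j) b d) * x $ d)"
    unfolding lin_def by (simp add: sum_subtractf left_diff_distrib)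
  also have "\<dots> = (if i = j then lin (TT l) x b else 0)"
    unfolding MIT0[OF a] lin_def by simp
  finally show ?thesis unfolding lin_mm .
qed


lemma hom2:
  fixes U :: "'a::finite pt set" and L :: "'a pt \<Rightarrow> real"
  assumes sol: "second_order_lagrangian U L" and hom: "homogeneous U L"
    and i: "i \<in> {1,2}" and l: "l \<in> {1,2}" and z: "z \<in> U"
  shows "(\<Sum>b\<in>UNIV. lin (DD i l) z b * pd b L z) = (if i = l then 1 else 0) * L z"
proof -
  have h: "lie_fun (Delta 1 [i] l) L z = (if i = l then L z else 0)"
    using hom i l z unfolding homogeneous_def by blast
  have D1: "Delta 1 [i] l = lin (dg (pm (sm 1 i) (tm 1 l)) :: ('a \<times> mi) \<Rightarrow> _)"
    using i l by (simp add: Delta_lin Smat_dg TMat_dg mm_dg)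
  have DDd: "DD i l = (dg (ddc i l) :: ('a \<times> mi) \<Rightarrow> _)" using DD_dg i l .
  have tm: "lin (dg (pm (sm 1 i) (tm 1 l))) z b * pd b L z = lin (DD i l) z b * pd b L z" for b :: "'a \<times> mi"
  proof (cases "mi_ord (snd b) \<le> 2")
    case True
    have "dg (pm (sm 1 i) (tm 1 l)) b d = dg (ddc i l) b d" for d :: "'a \<times> mi"
    proof -
      have "fst (mi_rep (snd b)) + snd (mi_rep (snd b)) \<le> 2" using True unfolding mi_ord_def .
      then show ?thesis unfolding dg_def using dd_all[OF rep_in rep_in, of "snd b" "snd d"] i l by auto
    qed
    then show ?thesis unfolding DDd lin_def by simp
  next
    case False
    then show ?thesis using vanish[OF sol z] by simp
  qed
  have "(\<Sum>b\<in>UNIV. lin (DD i l) z b * pd b L z) = lie_fun (Delta 1 [i] l) L z"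
    unfolding D1 lie_fun_lin by (rule sum.cong[OF refl]) (rule tm[symmetric])
  then show ?thesis using h by simp
qed

lemma Sf1: "Sforms 1 [m] (dfun L) y c = (\<Sum>t\<in>UNIV. pd t L y * PP m t c)"
  unfolding PP_def by (simp add: Sform_def dfun_def)

lemma Sf2: "Sforms 1 [j, m] (dfun L) = (\<lambda>z c. \<Sum>s\<in>UNIV. pd s L z * QQ m j s c)"
proof (intro ext)
  fix z c
  have "Sforms 1 [j, m] (dfun L) z c = (\<Sum>t\<in>UNIV. \<Sum>s\<in>UNIV. pd s L z * (PP m s t * PP j t c))"
    unfolding PP_def by (simp add: Sform_def dfun_def sum_distrib_left sum_distrib_right mult_ac)
  also have "\<dots> = (\<Sum>s\<in>UNIV. \<Sum>t\<in>UNIV. pd s L z * (PP m s t * PP j t c))" by (rule sum.swap)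
  also have "\<dots> = (\<Sum>s\<in>UNIV. pd s L z * QQ m j s c)"
    unfolding QQ_def mm_def by (simp add: sum_distrib_left)
  finally show "Sforms 1 [j, m] (dfun L) z c = (\<Sum>s\<in>UNIV. pd s L z * QQ m j s c)" .
qed

definition Fm :: "('a::finite pt \<Rightarrow> real) \<Rightarrow> nat \<Rightarrow> 'a pt \<Rightarrow> ('a \<times> mi) \<Rightarrow> real" where
  "Fm L m y c = (\<Sum>s\<in>UNIV. pd s L y * RR m s c)
     + (\<Sum>j\<in>{1,2}. \<Sum>b\<in>UNIV. \<Sum>s\<in>UNIV. lin (TT j) y b * WW m j s c * pd b (pd s L) y)"

lemma hilbert_rep:
  fixes L :: "'a::finite pt \<Rightarrow> real"
  assumes U: "open U" and sm: "smooth_on U L" and y: "y \<in> U"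
  shows "hilbert_form L m y c = Fm L m y c"
proof -
  have dL1: "\<And>s. pd s L differentiable at y" using smooth_diff[OF smooth_pd[OF sm] U y] .
  have lf: "lie_form (Tvf 2 j) (Sforms 1 [j, m] (dfun L)) y c =
     (\<Sum>s\<in>UNIV. pd s L y * mm (QQ m j) (TT j) s c) + (\<Sum>b\<in>UNIV. lin (TT j) y b * (\<Sum>s\<in>UNIV. pd b (pd s L) y * QQ m j s c))"
    for j
  proof -
    have "lie_form (Tvf 2 j) (Sforms 1 [j, m] (dfun L)) y c = lie_form (lin (TT j)) (\<lambda>z c. \<Sum>s\<in>UNIV. pd s L z * QQ m j s c) y c"
      unfolding Sf2 Tvf_lin TT_def ..
    also have "\<dots> = (\<Sum>b\<in>UNIV. TT j b c * (\<Sum>s\<in>UNIV. pd s L y * QQ m j s b))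
        + (\<Sum>b\<in>UNIV. lin (TT j) y b * pd b (\<lambda>z. \<Sum>s\<in>UNIV. pd s L z * QQ m j s c) y)"
      by (rule lie_form_lin) (use dL1 in simp)
    also have "(\<Sum>b\<in>UNIV. TT j b c * (\<Sum>s\<in>UNIV. pd s L y * QQ m j s b)) = (\<Sum>s\<in>UNIV. pd s L y * mm (QQ m j) (TT j) s c)"
    proof -
      have "(\<Sum>b\<in>UNIV. TT j b c * (\<Sum>s\<in>UNIV. pd s L y * QQ m j s b)) = (\<Sum>b\<in>UNIV. \<Sum>s\<in>UNIV. pd s L y * (QQ m j s b * TT j b c))"
        by (simp add: sum_distrib_left mult_ac)
      also have "\<dots> = (\<Sum>s\<in>UNIV. \<Sum>b\<in>UNIV. pd s L y * (QQ m j s b * TT j b c))" by (rule sum.swap)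
      also have "\<dots> = (\<Sum>s\<in>UNIV. pd s L y * mm (QQ m j) (TT j) s c)" unfolding mm_def by (simp add: sum_distrib_left)
      finally show ?thesis .
    qed
    also have "(\<lambda>b. pd b (\<lambda>z. \<Sum>s\<in>UNIV. pd s L z * QQ m j s c) y) = (\<lambda>b. \<Sum>s\<in>UNIV. pd b (pd s L) y * QQ m j s c)"
      using dL1 by (simp add: pd_sum pd_mult pd_const)
    finally show ?thesis .
  qed
  have "hilbert_form L m y c = (\<Sum>t\<in>UNIV. pd t L y * PP m t c) - 1/2 * (\<Sum>j\<in>{1,2}.
     (\<Sum>s\<in>UNIV. pd s L y * mm (QQ m j) (TT j) s c) + (\<Sum>b\<in>UNIV. lin (TT j) y b * (\<Sum>s\<in>UNIV. pd b (pd s L) y * QQ m j s c)))"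
    unfolding hilbert_form_def Sf1 lf ..
  also have "\<dots> = Fm L m y c"
    unfolding Fm_def RR_def WW_def
    by (simp add: sum_distrib_left sum_subtractf right_diff_distrib sum.distrib sum_negf algebra_simps)
  finally show ?thesis .
qed

lemma Fm_diff:
  fixes L :: "'a::finite pt \<Rightarrow> real"
  assumes U: "open U" and sm: "smooth_on U L" and x: "x \<in> U"
  shows "(\<lambda>y. Fm L m y c) differentiable at x"
    and "pd e (\<lambda>y. Fm L m y c) x = (\<Sum>s\<in>UNIV. pd e (pd s L) x * RR m s c)
     + (\<Sum>j\<in>{1,2}. \<Sum>b\<in>UNIV. \<Sum>s\<in>UNIV. TT j b e * WW m j s c * pd b (pd s L) x
          + lin (TT j) x b * WW m j s c * pd e (pd b (pd s L)) x)"
proof -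
  have dL1: "\<And>s. pd s L differentiable at x" using smooth_diff[OF smooth_pd[OF sm] U x] .
  have dL2: "\<And>s b. pd b (pd s L) differentiable at x" using smooth_diff[OF smooth_pd[OF smooth_pd[OF sm]] U x] .
  show "(\<lambda>y. Fm L m y c) differentiable at x" unfolding Fm_def using dL1 dL2 by simp
  show "pd e (\<lambda>y. Fm L m y c) x = (\<Sum>s\<in>UNIV. pd e (pd s L) x * RR m s c)
     + (\<Sum>j\<in>{1,2}. \<Sum>b\<in>UNIV. \<Sum>s\<in>UNIV. TT j b e * WW m j s c * pd b (pd s L) x
          + lin (TT j) x b * WW m j s c * pd e (pd b (pd s L)) x)"
    unfolding Fm_def using dL1 dL2 by (simp add: pd_add pd_sum pd_mult pd_lin pd_const)
qed

lemma final_j: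
  fixes Bv Tv1 Tv2 Q11 Q12 Q21 Q22 :: real
  assumes "i \<in> {1,2}" "l \<in> {1,2}" "m \<in> {1,2}"
  shows "(\<Sum>j\<in>{1::nat,2}. Bv * (Tv j * (1/2 * ((if j = l then Q m i else 0) + (if m = l then Q i j else 0)))
          + (- 1/2 * Q m j) * (if i = j then Tv l else 0)))
    = - (if m = l then (\<Sum>j\<in>{1,2}. Tv j * (- 1/2 * Q i j) * Bv) else 0)"
  using assms by (auto simp: algebra_simps)

theorem lemma5_main:
  fixes U :: "'a::finite pt set" and L :: "'a pt \<Rightarrow> real"
  assumes sol: "second_order_lagrangian U L"
    and hom: "homogeneous U L"
    and i: "i \<in> {1,2}" and l: "l \<in> {1,2}" and m: "m \<in> {1,2}"
    and x: "x \<in> U"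
  shows "lie_form (Delta 2 [i] l) (hilbert_form L m) x c =
           (if i = l then hilbert_form L m x c else 0)
         - (if m = l then hilbert_form L i x c else 0)"
proof -
  have U: "open U" and sm: "smooth_on U L" using sol unfolding second_order_lagrangian_def by auto
  define \<delta> :: real where "\<delta> = (if i = l then 1 else 0)"
  define D :: "('a \<times> mi) \<Rightarrow> ('a \<times> mi) \<Rightarrow> real" where "D = DD i l"
  have H: "\<And>z. z \<in> U \<Longrightarrow> (\<Sum>b\<in>UNIV. lin D z b * pd b L z) = \<delta> * L z"
    unfolding D_def \<delta>_def using hom2[OF sol hom i l] by blast
  note E1x = E1[OF U sm H x]
  note E2x = E2[OF U sm H x]
  have dF: "\<And>b. (\<lambda>y. Fm L m y b) differentiable at x" using Fm_diff(1)[OF U sm x] .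
  have "lie_form (Delta 2 [i] l) (hilbert_form L m) x c = lie_form (lin D) (Fm L m) x c"
    unfolding Delta_lin D_def DD_def
    by (rule lie_form_cong[OF U x]) (rule hilbert_rep[OF U sm])
  also have "\<dots> = (\<Sum>e\<in>UNIV. D e c * Fm L m x e) + (\<Sum>e\<in>UNIV. lin D x e * pd e (\<lambda>y. Fm L m y c) x)"
    by (rule lie_form_lin) (rule dF)
  also have "\<dots> = (\<Sum>e\<in>UNIV. D e c * ((\<Sum>s\<in>UNIV. pd s L x * RR m s e)
         + (\<Sum>j\<in>{1,2}. \<Sum>b\<in>UNIV. \<Sum>s\<in>UNIV. lin (TT j) x b * WW m j s e * pd b (pd s L) x)))
    + (\<Sum>e\<in>UNIV. lin D x e * ((\<Sum>s\<in>UNIV. pd e (pd s L) x * RR m s c)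
     + (\<Sum>j\<in>{1,2}. \<Sum>b\<in>UNIV. \<Sum>s\<in>UNIV. TT j b e * WW m j s c * pd b (pd s L) x
          + lin (TT j) x b * WW m j s c * pd e (pd b (pd s L)) x)))"
    unfolding Fm_diff(2)[OF U sm x] unfolding Fm_def ..
  also have "\<dots> = \<delta> * ((\<Sum>s\<in>UNIV. pd s L x * RR m s c) + (\<Sum>j\<in>{1,2}. \<Sum>b\<in>UNIV. \<Sum>s\<in>UNIV. lin (TT j) x b * WW m j s c * pd b (pd s L) x))
    + (\<Sum>s\<in>UNIV. pd s L x * (mm (RR m) D s c - mm D (RR m) s c))
    + (\<Sum>j\<in>{1,2}. \<Sum>b\<in>UNIV. \<Sum>s\<in>UNIV. pd b (pd s L) x * (lin (TT j) x b * (mm (WW m j) D s c - mm D (WW m j) s c)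
         + WW m j s c * ((\<Sum>e\<in>UNIV. TT j b e * lin D x e) - (\<Sum>e\<in>UNIV. D b e * lin (TT j) x e))))"
    by (rule ALG[where a = "\<lambda>s. pd s L x" and B = "\<lambda>s b. pd b (pd s L) x" and C = "\<lambda>s b e. pd e (pd b (pd s L)) x"
          and X = "\<lambda>e. lin D x e" and Tv = "\<lambda>j b. lin (TT j) x b"]) (use E1x E2x in auto)
  also have "(\<Sum>s\<in>UNIV. pd s L x * (mm (RR m) D s c - mm D (RR m) s c)) =
      - (if m = l then (\<Sum>s\<in>UNIV. pd s L x * RR i s c) else 0)"
    unfolding D_def MI1[OF i l m] by (simp add: sum_negf)
  also have "(\<Sum>j\<in>{1,2}. \<Sum>b\<in>UNIV. \<Sum>s\<in>UNIV. pd b (pd s L) x * (lin (TT j) x b * (mm (WW m j) D s c - mm D (WW m j) s c)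
         + WW m j s c * ((\<Sum>e\<in>UNIV. TT j b e * lin D x e) - (\<Sum>e\<in>UNIV. D b e * lin (TT j) x e))))
     = (\<Sum>j\<in>{1,2}. \<Sum>b\<in>UNIV. \<Sum>s\<in>UNIV. pd b (pd s L) x * (lin (TT j) x b *
          (1/2 * ((if j = l then QQ m i s c else 0) + (if m = l then QQ i j s c else 0)))
         + (- 1/2 * QQ m j s c) * (if i = j then lin (TT l) x b else 0)))"
  proof (rule sum.cong[OF refl], goal_cases)
    case (1 j)
    then have j: "j \<in> {1,2}" .
    show ?case unfolding D_def MIW[OF i l m j] MIT[OF i l j] by (simp add: WW_def)
  qed
  also have "\<dots> = (\<Sum>b\<in>UNIV. \<Sum>s\<in>UNIV. \<Sum>j\<in>{1,2}. pd b (pd s L) x * (lin (TT j) x b *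
          (1/2 * ((if j = l then QQ m i s c else 0) + (if m = l then QQ i j s c else 0)))
         + (- 1/2 * QQ m j s c) * (if i = j then lin (TT l) x b else 0)))"
    by (subst sum.swap) (intro sum.cong refl sum.swap)
  also have "\<dots> = (\<Sum>b\<in>UNIV. \<Sum>s\<in>UNIV. - (if m = l then (\<Sum>j\<in>{1,2}. lin (TT j) x b * (- 1/2 * QQ i j s c) * pd b (pd s L) x) else 0))"
    by (intro sum.cong refl final_j[OF i l m])
  also have "\<dots> = - (if m = l then (\<Sum>j\<in>{1,2}. \<Sum>b\<in>UNIV. \<Sum>s\<in>UNIV. lin (TT j) x b * WW i j s c * pd b (pd s L) x) else 0)"
  proof -
    have "(\<Sum>b\<in>UNIV. \<Sum>s\<in>UNIV. \<Sum>j\<in>{1,2}. lin (TT j) x b * (- 1/2 * QQ i j s c) * pd b (pd s L) x)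
        = (\<Sum>j\<in>{1,2}. \<Sum>b\<in>UNIV. \<Sum>s\<in>UNIV. lin (TT j) x b * WW i j s c * pd b (pd s L) x)"
      unfolding WW_def by (subst sum.swap) (intro sum.cong refl sum.swap)
    then show ?thesis by (simp add: sum_negf)
  qed
  finally have eq: "lie_form (Delta 2 [i] l) (hilbert_form L m) x c =
      \<delta> * ((\<Sum>s\<in>UNIV. pd s L x * RR m s c) + (\<Sum>j\<in>{1,2}. \<Sum>b\<in>UNIV. \<Sum>s\<in>UNIV. lin (TT j) x b * WW m j s c * pd b (pd s L) x))
      + - (if m = l then (\<Sum>s\<in>UNIV. pd s L x * RR i s c) else 0)
      + - (if m = l then (\<Sum>j\<in>{1,2}. \<Sum>b\<in>UNIV. \<Sum>s\<in>UNIV. lin (TT j) x b * WW i j s c * pd b (pd s L) x) else 0)" .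
  have "\<dots> = \<delta> * Fm L m x c - (if m = l then Fm L i x c else 0)"
    unfolding Fm_def by (cases "m = l") simp_all
  then show ?thesis unfolding eq \<delta>_def using hilbert_rep[OF U sm x] by simp
qed


theorem lemma5:
  fixes U :: "'a::finite pt set" and L :: "'a pt \<Rightarrow> real"
  assumes "second_order_lagrangian U L"
    and "homogeneous U L"
    and "i \<in> {1,2}" and "l \<in> {1,2}" and "m \<in> {1,2}"
    and "x \<in> U"
  shows "lie_form (Delta 2 [i] l) (hilbert_form L m) x c =
           (if i = l then hilbert_form L m x c else 0)
         - (if m = l then hilbert_form L i x c else 0)"
  using lemma5_main[OF assms] .

end
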